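(* Let $\kappa > 0$ and let $(X,d)$ be a compact CAT$(\kappa)$ space such that $d(v,w) < \pi/(2\sqrt{\kappa})$ for all $v,w \in X$. Let $N \ge 1$ and let $f = \sum_{i=1}^N f_i$, where each $f_i : X \to (-\infty,\infty]$ is proper, convex and lower semi-continuous, and suppose $f$ attains its minimum. Let $x_0 \in X$ and let $(\lambda_j)_{j\ge0}$ be a sequence of positive real numbers with $\sum_{j \ge 0}\lambda_j = \infty$ and $\sum_{j\ge 0}\lambda_j^2 < \infty$. Define $(x_n)$ by \[ x_{jN+i} = J^i_{\lambda_j}(x_{jN+i-1}), \qquad j \ge 0,\ i \in \{1,\ldots,N\}, \] where $J^i_\lambda(x) = \operatorname{argmin}_{y\in X}\left[f_i(y) + \frac{1}{\lambda}\Psi_x(y)\right]$. Suppose there exists $L > 0$ such that for every $j \in \mathbb{N}$ and $i \in \{1,\ldots,N\}$, \[ f_i(x_{jN}) - f_i(x_{jN+i}) \le L\, d(x_{jN},x_{jN+i}) \quad\text{and}\quad f_i(x_{jN+i-1}) - f_i(x_{jN+i}) \le L\, d(x_{jN+i-1},x_{jN+i}). \] Then $(x_n)$ converges to a minimum point of $f$.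
   Context: A CAT$(\kappa)$ space ($\kappa>0$) is a metric space in which any two points at distance $<\pi/\sqrt{\kappa}$ are joined by a geodesic and every geodesic triangle of perimeter $<2\pi/\sqrt{\kappa}$ satisfies the CAT$(\kappa)$ comparison inequality with respect to its comparison triangle in the sphere of constant curvature $\kappa$. Writing $(1-t)x+ty$ for the point at distance $t\,d(x,y)$ from $x$ on the geodesic from $x$ to $y$, a function $g$ is convex if $g((1-t)x+ty) \le (1-t)g(x)+tg(y)$ for all $x,y$, $t\in[0,1]$; proper means not identically $\infty$. For $x \in X$, $\Psi_x : X \to [0,\infty)$ is $\Psi_x(y) = \frac{1}{\kappa\cos(\sqrt{\kappa}\,d(y,x))} - \frac{\cos(\sqrt{\kappa}\,d(y,x))}{\kappa}$; for each proper convex lower semi-continuous $g$ and $\lambda>0$ the minimizer $\operatorname{argmin}_{y\in X}[g(y)+\frac1\lambda\Psi_x(y)]$ exists and is unique under the stated assumptions, so the $J^i_\lambda$ are well-defined maps $X\to X$. *)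

theory Defs
  imports "HOL-Analysis.Analysis" "HOL-Library.Extended_Real"
begin

definition geodesic_in :: "'a::metric_space set \<Rightarrow> 'a \<Rightarrow> 'a \<Rightarrow> (real \<Rightarrow> 'a) \<Rightarrow> bool" where
  "geodesic_in X x y \<gamma> \<longleftrightarrow> \<gamma> 0 = x \<and> \<gamma> (dist x y) = y \<and>
     (\<forall>s\<in>{0..dist x y}. \<gamma> s \<in> X) \<and>
     (\<forall>s\<in>{0..dist x y}. \<forall>t\<in>{0..dist x y}. dist (\<gamma> s) (\<gamma> t) = \<bar>s - t\<bar>)"

text \<open>Model space of constant curvature kappa > 0: the sphere of radius 1/sqrt kappa in R^3
  with its intrinsic (great-circle) distance.\<close>
definition model_sphere :: "real \<Rightarrow> (real^3) set" where
  "model_sphere \<kappa> = {u. norm u = 1 / sqrt \<kappa>}"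

definition sdist :: "real \<Rightarrow> real^3 \<Rightarrow> real^3 \<Rightarrow> real" where
  "sdist \<kappa> u v = arccos (\<kappa> * (u \<bullet> v)) / sqrt \<kappa>"

definition on_model_seg :: "real \<Rightarrow> real^3 \<Rightarrow> real^3 \<Rightarrow> real \<Rightarrow> real^3 \<Rightarrow> bool" where
  "on_model_seg \<kappa> A B s z \<longleftrightarrow> z \<in> model_sphere \<kappa> \<and> sdist \<kappa> A z = s \<and> sdist \<kappa> z B = sdist \<kappa> A B - s"

definition side_cmp :: "real \<Rightarrow> 'a::metric_space \<Rightarrow> 'a \<Rightarrow> (real \<Rightarrow> 'a) \<Rightarrow> real^3 \<Rightarrow> real^3
     \<Rightarrow> 'a \<Rightarrow> 'a \<Rightarrow> (real \<Rightarrow> 'a) \<Rightarrow> real^3 \<Rightarrow> real^3 \<Rightarrow> bool" where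
  "side_cmp \<kappa> a b g A B a' b' g' A' B' \<longleftrightarrow>
     (\<forall>s\<in>{0..dist a b}. \<forall>t\<in>{0..dist a' b'}. \<forall>z z'.
        on_model_seg \<kappa> A B s z \<and> on_model_seg \<kappa> A' B' t z' \<longrightarrow> dist (g s) (g' t) \<le> sdist \<kappa> z z')"

definition comparison_triangle :: "real \<Rightarrow> 'a::metric_space \<Rightarrow> 'a \<Rightarrow> 'a \<Rightarrow> real^3 \<Rightarrow> real^3 \<Rightarrow> real^3 \<Rightarrow> bool" where
  "comparison_triangle \<kappa> p q r P Q R \<longleftrightarrow>
     P \<in> model_sphere \<kappa> \<and> Q \<in> model_sphere \<kappa> \<and> R \<in> model_sphere \<kappa> \<and>
     sdist \<kappa> P Q = dist p q \<and> sdist \<kappa> Q R = dist q r \<and> sdist \<kappa> R P = dist r p"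

definition CAT_space :: "real \<Rightarrow> 'a::metric_space set \<Rightarrow> bool" where
  "CAT_space \<kappa> X \<longleftrightarrow>
     (\<forall>x\<in>X. \<forall>y\<in>X. dist x y < pi / sqrt \<kappa> \<longrightarrow> (\<exists>\<gamma>. geodesic_in X x y \<gamma>)) \<and>
     (\<forall>p\<in>X. \<forall>q\<in>X. \<forall>r\<in>X. \<forall>g1 g2 g3.
        geodesic_in X p q g1 \<and> geodesic_in X q r g2 \<and> geodesic_in X r p g3 \<and>
        dist p q + dist q r + dist r p < 2 * pi / sqrt \<kappa> \<longrightarrow>
        (\<forall>P Q R. comparison_triangle \<kappa> p q r P Q R \<longrightarrow>
           side_cmp \<kappa> p q g1 P Q p q g1 P Q \<and> side_cmp \<kappa> p q g1 P Q q r g2 Q R \<and>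
           side_cmp \<kappa> p q g1 P Q r p g3 R P \<and>
           side_cmp \<kappa> q r g2 Q R p q g1 P Q \<and> side_cmp \<kappa> q r g2 Q R q r g2 Q R \<and>
           side_cmp \<kappa> q r g2 Q R r p g3 R P \<and>
           side_cmp \<kappa> r p g3 R P p q g1 P Q \<and> side_cmp \<kappa> r p g3 R P q r g2 Q R \<and>
           side_cmp \<kappa> r p g3 R P r p g3 R P))"

definition geo_convex :: "'a::metric_space set \<Rightarrow> ('a \<Rightarrow> ereal) \<Rightarrow> bool" where
  "geo_convex X g \<longleftrightarrow> (\<forall>x\<in>X. \<forall>y\<in>X. \<forall>\<gamma>. geodesic_in X x y \<gamma> \<longrightarrow>
     (\<forall>t\<in>{0..1}. g (\<gamma> (t * dist x y)) \<le> ereal (1 - t) * g x + ereal t * g y))"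

definition lsc_on :: "'a::metric_space set \<Rightarrow> ('a \<Rightarrow> ereal) \<Rightarrow> bool" where
  "lsc_on X g \<longleftrightarrow> (\<forall>x\<in>X. \<forall>u. (\<forall>n. u n \<in> X) \<and> u \<longlonglongrightarrow> x \<longrightarrow> g x \<le> liminf (\<lambda>n. g (u n)))"

definition proper_on :: "'a set \<Rightarrow> ('a \<Rightarrow> ereal) \<Rightarrow> bool" where
  "proper_on X g \<longleftrightarrow> (\<exists>x\<in>X. g x \<noteq> \<infinity>)"

definition Psi :: "real \<Rightarrow> 'a::metric_space \<Rightarrow> 'a \<Rightarrow> real" where
  "Psi \<kappa> x y = 1 / (\<kappa> * cos (sqrt \<kappa> * dist y x)) - cos (sqrt \<kappa> * dist y x) / \<kappa>"

definition resolvent :: "real \<Rightarrow> 'a::metric_space set \<Rightarrow> ('a \<Rightarrow> ereal) \<Rightarrow> real \<Rightarrow> 'a \<Rightarrow> 'a" where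
  "resolvent \<kappa> X g lam x = (THE y. y \<in> X \<and>
     (\<forall>z\<in>X. g y + ereal (Psi \<kappa> x y / lam) \<le> g z + ereal (Psi \<kappa> x z / lam)))"

end

theory Submission
  imports Defs "HOL-Analysis.Analysis" "HOL-Library.Extended_Real"
begin

lemma inner3: "(vector [a,b,c] :: real^3) \<bullet> vector [d,e,f] = a*d + b*e + c*f"
  by (simp add: inner_vec_def sum_3)

lemma model_triangle:
  fixes a b c :: real
  assumes "0 \<le> a" "0 \<le> b" "0 \<le> c" "a < pi/2" "b < pi/2" "c < pi/2"
    "b \<le> a + c" "a \<le> b + c" "c \<le> a + b"
  shows "\<exists>U V W :: real^3. U \<bullet> U = 1 \<and> V \<bullet> V = 1 \<and> W \<bullet> W = 1 \<and>
     U \<bullet> V = cos a \<and> V \<bullet> W = cos b \<and> W \<bullet> U = cos c"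
proof (cases "a = 0")
  case True
  then have "b = c" using assms by simp
  show ?thesis
    apply (rule exI[of _ "vector [1,0,0]"], rule exI[of _ "vector [1,0,0]"],
        rule exI[of _ "vector [cos c, sin c, 0]"])
    using True \<open>b = c\<close> by (simp add: inner3)
next
  case False
  then have sa: "sin a > 0" using assms by (intro sin_gt_zero) auto
  define y where "y = (cos b - cos a * cos c) / sin a"
  have c1: "cos (a + c) \<le> cos b"
    using assms by (intro cos_monotone_0_pi_le) auto
  have c2: "cos b \<le> cos \<bar>a - c\<bar>"
    using assms by (intro cos_monotone_0_pi_le) auto
  have c2': "cos \<bar>a - c\<bar> = cos (a - c)" by (rule cos_abs_real)
  have sc: "sin c \<ge> 0" using assms by (intro sin_ge_zero) auto
  have "\<bar>cos b - cos a * cos c\<bar> \<le> sin a * sin c"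
    using c1 c2 c2' by (simp add: cos_add cos_diff abs_le_iff)
  then have "\<bar>y\<bar> \<le> sin c" using sa by (simp add: y_def abs_divide divide_le_eq mult.commute)
  then have y2: "y^2 \<le> (sin c)^2" using sc by (metis abs_le_square_iff abs_of_nonneg)
  define z where "z = sqrt ((sin c)^2 - y^2)"
  have z2: "z^2 = (sin c)^2 - y^2" using y2 by (simp add: z_def)
  have e1: "cos a * cos c + sin a * y = cos b" using sa by (simp add: y_def field_simps)
  have n3: "y^2 + (z^2 + (cos c)^2) = 1" using z2 sin_cos_squared_add[of c] by linarith
  show ?thesis
    apply (rule exI[of _ "vector [1,0,0]"], rule exI[of _ "vector [cos a, sin a, 0]"],
        rule exI[of _ "vector [cos c, y, z]"])
    using e1 n3 by (simp add: inner3 power2_eq_square[symmetric] algebra_simps)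
qed

lemma model_seg_point:
  fixes U V :: "real^3" and a u :: real
  assumes "U \<bullet> U = 1" "V \<bullet> V = 1" "U \<bullet> V = cos a" "sin a \<noteq> 0"
  defines "Z \<equiv> (sin (a - u) / sin a) *\<^sub>R U + (sin u / sin a) *\<^sub>R V"
  shows "Z \<bullet> U = cos u" "Z \<bullet> V = cos (a - u)" "Z \<bullet> Z = 1"
proof -
  have vu: "V \<bullet> U = cos a" using assms by (simp add: inner_commute)
  show 1: "Z \<bullet> U = cos u"
    using assms vu by (simp add: Z_def inner_add_left sin_diff field_simps)
  show 2: "Z \<bullet> V = cos (a - u)"
  proof -
    have "Z \<bullet> V = (sin (a - u) * cos a + sin u) / sin a"
      using assms by (simp add: Z_def inner_add_left field_simps)
    also have "sin u = sin (a - (a - u))" by simp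
    also have "(sin (a - u) * cos a + sin (a - (a - u))) / sin a = cos (a - u)"
      using assms(4) unfolding sin_diff[of a "a - u"] by (simp add: field_simps)
    finally show ?thesis .
  qed
  have "Z \<bullet> Z = (sin (a - u) / sin a) * (Z \<bullet> U) + (sin u / sin a) * (Z \<bullet> V)"
    unfolding Z_def by (simp add: inner_add_right)
  also have "\<dots> = (sin (a - u) * cos u + sin u * cos (a - u)) / sin a"
    using 1 2 by (simp add: add_divide_distrib)
  also have "sin (a - u) * cos u + sin u * cos (a - u) = sin a"
    using sin_add[of "a - u" u] by (simp add: mult.commute)
  finally show "Z \<bullet> Z = 1" using assms(4) by simp
qed

lemma unit_inner_bound:
  fixes A B :: "real^3"
  assumes "A \<bullet> A = 1" "B \<bullet> B = 1"
  shows "-1 \<le> A \<bullet> B \<and> A \<bullet> B \<le> 1"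
proof -
  have "norm A = 1" "norm B = 1" using assms by (simp_all add: norm_eq_sqrt_inner)
  with Cauchy_Schwarz_ineq2[of A B] show ?thesis by auto
qed

lemma sdist_scaled:
  assumes k: "\<kappa> > 0"
  shows "sdist \<kappa> ((1 / sqrt \<kappa>) *\<^sub>R A) ((1 / sqrt \<kappa>) *\<^sub>R B) = arccos (A \<bullet> B) / sqrt \<kappa>"
proof -
  have "\<kappa> * ((1 / sqrt \<kappa>) *\<^sub>R A \<bullet> (1 / sqrt \<kappa>) *\<^sub>R B) = A \<bullet> B"
    using k by (simp add: real_sqrt_mult[symmetric])
  then show ?thesis by (simp add: sdist_def)
qed

lemma sphere_scaled:
  assumes k: "\<kappa> > 0" and "A \<bullet> A = 1"
  shows "(1 / sqrt \<kappa>) *\<^sub>R A \<in> model_sphere \<kappa>"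
  using assms by (simp add: model_sphere_def norm_eq_sqrt_inner real_sqrt_divide)

lemma cat_geod:
  assumes k: "\<kappa> > 0" and cat: "CAT_space \<kappa> X"
    and diam: "\<forall>v\<in>X. \<forall>w\<in>X. dist v w < pi / (2 * sqrt \<kappa>)"
    and "v \<in> X" "w \<in> X"
  shows "\<exists>\<gamma>. geodesic_in X v w \<gamma>"
proof -
  have "dist v w < pi / (2 * sqrt \<kappa>)" using diam assms by auto
  also have "\<dots> \<le> pi / sqrt \<kappa>" using k by (simp add: divide_simps)
  finally show ?thesis using cat assms unfolding CAT_space_def by blast
qed

lemma cat_G:
  fixes X :: "'a::metric_space set"
  assumes k: "\<kappa> > 0" and cat: "CAT_space \<kappa> X"
    and diam: "\<forall>v\<in>X. \<forall>w\<in>X. dist v w < pi / (2 * sqrt \<kappa>)"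
    and xX: "x \<in> X" and yX: "y \<in> X" and zX: "z \<in> X" and g: "geodesic_in X y z \<gamma>"
    and s: "0 \<le> s" "s \<le> dist y z"
  shows "cos (sqrt \<kappa> * dist y x) * sin (sqrt \<kappa> * dist y z - sqrt \<kappa> * s)
       + cos (sqrt \<kappa> * dist z x) * sin (sqrt \<kappa> * s)
       \<le> cos (sqrt \<kappa> * dist (\<gamma> s) x) * sin (sqrt \<kappa> * dist y z)"
proof (cases "y = z")
  case True
  then show ?thesis using s by simp
next
  case False
  define K where "K = sqrt \<kappa>"
  have K: "K > 0" using k by (simp add: K_def)
  have dK: "K * dist v w < pi / 2" if "v \<in> X" "w \<in> X" for v w
  proof -
    have "dist v w < pi / (2 * K)" using diam that by (auto simp: K_def)
    then show ?thesis using K by (simp add: field_simps)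
  qed
  obtain g2 where g2: "geodesic_in X z x g2" using cat_geod[OF k cat diam zX xX] by blast
  obtain g3 where g3: "geodesic_in X x y g3" using cat_geod[OF k cat diam xX yX] by blast
  define a where "a = K * dist y z"
  define b where "b = K * dist z x"
  define c where "c = K * dist x y"
  have abc: "0 \<le> a" "0 \<le> b" "0 \<le> c" "a < pi/2" "b < pi/2" "c < pi/2"
    using dK[OF yX zX] dK[OF zX xX] dK[OF xX yX] K by (auto simp: a_def b_def c_def)
  have tri: "b \<le> a + c" "a \<le> b + c" "c \<le> a + b"
  proof -
    have "dist z x \<le> dist y z + dist x y"
      using dist_triangle[of z x y] by (simp add: dist_commute)
    then show "b \<le> a + c" using K unfolding a_def b_def c_def
      by (metis distrib_left mult_le_cancel_left_pos)
    have "dist y z \<le> dist z x + dist x y"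
      using dist_triangle[of y z x] by (simp add: dist_commute)
    then show "a \<le> b + c" using K unfolding a_def b_def c_def
      by (metis distrib_left mult_le_cancel_left_pos)
    have "dist x y \<le> dist y z + dist z x"
      using dist_triangle[of x y z] by (simp add: dist_commute)
    then show "c \<le> a + b" using K unfolding a_def b_def c_def
      by (metis distrib_left mult_le_cancel_left_pos)
  qed
  obtain U V W :: "real^3" where UVW: "U \<bullet> U = 1" "V \<bullet> V = 1" "W \<bullet> W = 1"
     "U \<bullet> V = cos a" "V \<bullet> W = cos b" "W \<bullet> U = cos c"
    using model_triangle[OF abc tri] by blast
  define P where "P = (1 / K) *\<^sub>R U"
  define Q where "Q = (1 / K) *\<^sub>R V"
  define R where "R = (1 / K) *\<^sub>R W"
  have sd: "sdist \<kappa> ((1 / K) *\<^sub>R A) ((1 / K) *\<^sub>R B) = arccos (A \<bullet> B) / K" for A B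
    using sdist_scaled[OF k] by (simp add: K_def)
  have sph: "(1 / K) *\<^sub>R A \<in> model_sphere \<kappa>" if "A \<bullet> A = 1" for A
    using sphere_scaled[OF k that] by (simp add: K_def)
  have PQ: "sdist \<kappa> P Q = dist y z"
    using sd[of U V] UVW abc K by (simp add: P_def Q_def arccos_cos a_def)
  have QR: "sdist \<kappa> Q R = dist z x"
    using sd[of V W] UVW abc K by (simp add: R_def Q_def arccos_cos b_def)
  have RP: "sdist \<kappa> R P = dist x y"
    using sd[of W U] UVW abc K by (simp add: R_def P_def arccos_cos c_def)
  have ct: "comparison_triangle \<kappa> y z x P Q R"
    unfolding comparison_triangle_def using PQ QR RP sph UVW by (simp add: P_def Q_def R_def)
  have per: "dist y z + dist z x + dist x y < 2 * pi / sqrt \<kappa>"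
  proof -
    have "K * (dist y z + dist z x + dist x y) < 2 * pi" using abc
      unfolding a_def b_def c_def by (simp add: distrib_left)
    then show ?thesis using K by (simp add: K_def field_simps)
  qed
  have sc: "side_cmp \<kappa> y z \<gamma> P Q z x g2 Q R"
    using cat yX zX xX g g2 g3 per ct unfolding CAT_space_def by blast
  have apos: "a > 0" using False K by (simp add: a_def)
  have sa: "sin a > 0" using apos abc by (intro sin_gt_zero) auto
  define u where "u = K * s"
  have u: "0 \<le> u" "u \<le> a" using s K by (simp_all add: u_def a_def)
  define Zu where "Zu = (sin (a - u) / sin a) *\<^sub>R U + (sin u / sin a) *\<^sub>R V"
  note ms = model_seg_point[OF UVW(1,2,4), of u, folded Zu_def, OF sa[THEN less_imp_neq, symmetric]]
  define Z where "Z = (1 / K) *\<^sub>R Zu"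
  have oms1: "on_model_seg \<kappa> P Q s Z"
  proof -
    have "sdist \<kappa> P Z = s"
      using sd[of U Zu] ms(1) u abc K by (simp add: P_def Z_def inner_commute arccos_cos u_def)
    moreover have "sdist \<kappa> Z Q = sdist \<kappa> P Q - s"
    proof -
      have "arccos (cos (a - u)) = a - u" using u abc by (intro arccos_cos) auto
      then have "sdist \<kappa> Z Q = (a - u) / K" using sd[of Zu V] ms(2) by (simp add: Q_def Z_def)
      also have "\<dots> = dist y z - s" using K by (simp add: a_def u_def field_simps)
      finally show ?thesis using PQ by simp
    qed
    ultimately show ?thesis unfolding on_model_seg_def using sph[OF ms(3)] by (simp add: Z_def)
  qed
  have oms2: "on_model_seg \<kappa> Q R (dist z x) R"
    unfolding on_model_seg_def using sph[OF UVW(3)] sd[of W W] UVW(3) QR by (simp add: R_def)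
  have "dist (\<gamma> s) (g2 (dist z x)) \<le> sdist \<kappa> Z R"
    using sc oms1 oms2 s unfolding side_cmp_def by auto
  moreover have "g2 (dist z x) = x" using g2 by (simp add: geodesic_in_def)
  ultimately have le: "dist (\<gamma> s) x \<le> arccos (Zu \<bullet> W) / K"
    using sd[of Zu W] by (simp add: Z_def R_def)
  have bnd: "-1 \<le> Zu \<bullet> W \<and> Zu \<bullet> W \<le> 1" using unit_inner_bound[OF ms(3) UVW(3)] .
  have "K * dist (\<gamma> s) x \<le> arccos (Zu \<bullet> W)" using le K by (simp add: field_simps)
  then have "cos (arccos (Zu \<bullet> W)) \<le> cos (K * dist (\<gamma> s) x)"
    using arccos_bounded[of "Zu \<bullet> W"] bnd K by (intro cos_monotone_0_pi_le) auto
  then have cz: "Zu \<bullet> W \<le> cos (K * dist (\<gamma> s) x)" using bnd by simp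
  have "Zu \<bullet> W = (sin (a - u) * cos c + sin u * cos b) / sin a"
    using UVW by (simp add: Zu_def inner_add_left inner_commute[of U W] add_divide_distrib)
  with cz have "sin (a - u) * cos c + sin u * cos b \<le> cos (K * dist (\<gamma> s) x) * sin a"
    using sa by (simp add: divide_le_eq)
  then show ?thesis unfolding K_def[symmetric] u_def[symmetric] a_def[symmetric]
    by (simp add: c_def b_def dist_commute[of x y] mult.commute right_diff_distrib[symmetric])
qed

lemma xcos_le_sin:
  fixes s :: real assumes "0 \<le> s" "s \<le> pi/2"
  shows "s * cos s \<le> sin s"
proof -
  have "s * cos s - sin s \<le> 0 * cos 0 - sin 0"
  proof (rule deriv_nonpos_imp_antimono[where g = "\<lambda>x. x * cos x - sin x" and g' = "\<lambda>x. - x * sin x" and a = 0 and b = s])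
    fix x assume "x \<in> {0..s}"
    show "((\<lambda>x. x * cos x - sin x) has_real_derivative - x * sin x) (at x)"
      by (auto intro!: derivative_eq_intros)
    have "sin x \<ge> 0" using \<open>x \<in> {0..s}\<close> assms by (intro sin_ge_zero) auto
    then show "- x * sin x \<le> 0" using \<open>x \<in> {0..s}\<close> by auto
  qed (use assms in auto)
  then show ?thesis by simp
qed

lemma sin_ratio:
  fixes s t :: real assumes "0 < t" "t \<le> s" "s \<le> pi/2"
  shows "sin s * t \<le> sin t * s"
proof -
  have "sin s / s \<le> sin t / t"
  proof (rule deriv_nonpos_imp_antimono[where g = "\<lambda>x. sin x / x" and g' = "\<lambda>x. (x * cos x - sin x) / x^2" and a = t and b = s])
    fix x assume x: "x \<in> {t..s}"
    then have "x > 0" using assms by auto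
    then show "((\<lambda>x. sin x / x) has_real_derivative (x * cos x - sin x) / x^2) (at x)"
      by (auto intro!: derivative_eq_intros simp: power2_eq_square field_simps)
    have "x * cos x \<le> sin x" using x assms by (intro xcos_le_sin) auto
    then show "(x * cos x - sin x) / x^2 \<le> 0" by (intro divide_nonpos_nonneg) auto
  qed (use assms in auto)
  then show ?thesis using assms by (simp add: field_simps)
qed

lemma lemM:
  fixes th ph :: real
  assumes "0 < th" "th \<le> pi/2" "0 \<le> ph" "ph \<le> pi/2"
  shows "(cos th - cos ph) * th \<le> (ph^2 - th^2) / 2 * sin th"
proof -
  define k where "k = sin th / th"
  define G where "G = (\<lambda>x. cos x + k * x^2 / 2)"
  have dG: "(G has_real_derivative (- sin x + k * x)) (at x)" for x
    unfolding G_def by (auto intro!: derivative_eq_intros simp: power2_eq_square)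
  have "G th \<le> G ph"
  proof (cases "th \<le> ph")
    case True
    show ?thesis
    proof (rule DERIV_nonneg_imp_nondecreasing[OF True])
      fix x assume x: "th \<le> x" "x \<le> ph"
      have "sin x * th \<le> sin th * x" using x assms by (intro sin_ratio) auto
      then have "sin x \<le> k * x" using assms by (simp add: k_def field_simps)
      then show "\<exists>y. (G has_real_derivative y) (at x) \<and> 0 \<le> y" using dG[of x] by (intro exI[of _ "- sin x + k * x"]) auto
    qed
  next
    case False
    show ?thesis
    proof (rule deriv_nonpos_imp_antimono[where g = G and g' = "\<lambda>x. - sin x + k * x" and a = ph and b = th])
      fix x assume x: "x \<in> {ph..th}"
      show "(G has_real_derivative - sin x + k * x) (at x)" by (rule dG)
      show "- sin x + k * x \<le> 0"
      proof (cases "x = 0")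
        case False
        then have "0 < x" using x assms by auto
        then have "sin th * x \<le> sin x * th" using x assms by (intro sin_ratio) auto
        then show ?thesis using assms by (simp add: k_def field_simps)
      qed simp
    qed (use False in auto)
  qed
  then have "cos th - cos ph \<le> k * (ph^2 - th^2) / 2" by (simp add: G_def field_simps)
  then have "(cos th - cos ph) * th \<le> k * (ph^2 - th^2) / 2 * th"
    using assms by (intro mult_right_mono) auto
  also have "\<dots> = (ph^2 - th^2) / 2 * sin th" using assms by (simp add: k_def field_simps)
  finally show ?thesis .
qed

lemma opt_limit:
  fixes c cy th A :: real
  assumes c: "0 < c" and cy: "0 < cy" and th: "sin th > 0"
    and H: "\<And>t. 0 < t \<Longrightarrow> t \<le> 1 \<Longrightarrow>
      t * A \<le> (1 / ((c * sin ((1 - t) * th) + cy * sin (t * th)) / sin th)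
                 - (c * sin ((1 - t) * th) + cy * sin (t * th)) / sin th) - (1 / c - c)"
  shows "A \<le> (1 / c^2 + 1) * (c * cos th - cy) * th / sin th"
proof -
  define m where "m = (\<lambda>t. (c * sin ((1 - t) * th) + cy * sin (t * th)) / sin th)"
  define F where "F = (\<lambda>t. 1 / m t - m t)"
  define m' where "m' = (c * cos th * (- th) + cy * th) / sin th"
  have m0: "m 0 = c" using th by (simp add: m_def)
  have dm: "(m has_real_derivative m') (at 0)"
    unfolding m_def m'_def
    by (auto intro!: derivative_eq_intros simp: th[THEN less_imp_neq, symmetric])
  have dF: "(F has_real_derivative (- m' / c^2 - m')) (at 0)"
    unfolding F_def using dm m0 c
    by (auto intro!: derivative_eq_intros simp: power2_eq_square)
  have lim: "((\<lambda>t. (F (0 + t) - F 0) / t) \<longlongrightarrow> (- m' / c^2 - m')) (at 0)"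
    using dF by (simp add: DERIV_def)
  then have lim': "((\<lambda>t. (F t - F 0) / t) \<longlongrightarrow> (- m' / c^2 - m')) (at_right 0)"
    by (simp add: filterlim_at_split)
  have ev: "eventually (\<lambda>t. A \<le> (F t - F 0) / t) (at_right 0)"
  proof -
    have "eventually (\<lambda>t. 0 < t \<and> t < 1) (at_right (0::real))"
      by (auto simp: eventually_at_right_field intro!: exI[of _ 1])
    then show ?thesis
    proof (rule eventually_mono)
      fix t :: real assume t: "0 < t \<and> t < 1"
      have "t * A \<le> F t - F 0" using H[of t] t m0 unfolding F_def m_def by auto
      then show "A \<le> (F t - F 0) / t" using t by (simp add: field_simps)
    qed
  qed
  have "A \<le> - m' / c^2 - m'"
    by (rule tendsto_lowerbound[OF lim' ev]) simp
  also have "- m' / c^2 - m' = (1 / c^2 + 1) * (c * cos th - cy) * th / sin th"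
    using c th by (simp add: m'_def field_simps power2_eq_square)
  finally show ?thesis .
qed

definition phi :: "real \<Rightarrow> real" where "phi c = 1 / c - c"

lemma phi_mono: "0 < a \<Longrightarrow> a \<le> b \<Longrightarrow> phi b \<le> phi a"
  unfolding phi_def using divide_left_mono[of a b 1] by (simp add: mult_pos_pos)
lemma phi_strict: "0 < a \<Longrightarrow> a < b \<Longrightarrow> phi b < phi a"
  unfolding phi_def using divide_strict_left_mono[of a b 1] by (simp add: mult_pos_pos)
lemma phi_nonneg: "0 < c \<Longrightarrow> c \<le> 1 \<Longrightarrow> 0 \<le> phi c"
  unfolding phi_def by (simp add: field_simps) (metis mult_le_one less_le_not_le order.trans le_less)
lemma phi_conv: "0 < a \<Longrightarrow> 0 < b \<Longrightarrow> phi ((a + b) / 2) \<le> (phi a + phi b) / 2"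
proof -
  assume a: "0 < a" and b: "0 < b"
  have "4 * a * b \<le> (a + b)^2" using sum_squares_ge_zero[of "a - b" 0]
    by (simp add: power2_eq_square algebra_simps)
  then have "2 / (a + b) \<le> (1 / a + 1 / b) / 2" using a b
    by (simp add: field_simps power2_eq_square)
  moreover have "1 / ((a + b) / 2) = 2 / (a + b)" by simp
  ultimately show ?thesis unfolding phi_def by (simp add: add_divide_distrib diff_divide_distrib)
qed

locale catk =
  fixes \<kappa> :: real and X :: "'a::metric_space set"
  assumes k: "\<kappa> > 0" and cpt: "compact X" and cat: "CAT_space \<kappa> X"
    and diam: "\<forall>v\<in>X. \<forall>w\<in>X. dist v w < pi / (2 * sqrt \<kappa>)"
begin

lemma Kpos: "sqrt \<kappa> > 0" using k by simp

lemma dK: "v \<in> X \<Longrightarrow> w \<in> X \<Longrightarrow> sqrt \<kappa> * dist v w < pi / 2"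
proof -
  assume "v \<in> X" "w \<in> X"
  then have "dist v w < pi / (2 * sqrt \<kappa>)" using diam by auto
  then show ?thesis using Kpos by (simp add: field_simps)
qed

lemma cosD: "v \<in> X \<Longrightarrow> w \<in> X \<Longrightarrow> 0 < cos (sqrt \<kappa> * dist v w) \<and> cos (sqrt \<kappa> * dist v w) \<le> 1"
proof -
  assume a: "v \<in> X" "w \<in> X"
  have "0 \<le> sqrt \<kappa> * dist v w" using Kpos by simp
  moreover have "- (pi/2) \<le> 0" by simp
  ultimately show ?thesis using dK[OF a] by (intro conjI cos_gt_zero_pi) auto
qed

lemma delta: "\<exists>\<delta>. 0 \<le> \<delta> \<and> \<delta> < pi / 2 \<and> (\<forall>v\<in>X. \<forall>w\<in>X. sqrt \<kappa> * dist v w \<le> \<delta>)"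
proof (cases "X = {}")
  case True then show ?thesis by (intro exI[of _ 0]) auto
next
  case False
  have "continuous_on (X \<times> X) (\<lambda>p. dist (fst p) (snd p))" by (intro continuous_intros)
  moreover have "compact (X \<times> X)" using cpt by (intro compact_Times)
  moreover have "X \<times> X \<noteq> {}" using False by auto
  ultimately have "\<exists>p\<in>X \<times> X. \<forall>q\<in>X \<times> X. (\<lambda>p. dist (fst p) (snd p)) q \<le> (\<lambda>p. dist (fst p) (snd p)) p"
    by (intro continuous_attains_sup) 
  then obtain p where p: "p \<in> X \<times> X" "\<forall>q\<in>X \<times> X. dist (fst q) (snd q) \<le> dist (fst p) (snd p)"
    by blast
  show ?thesis
  proof (intro exI[of _ "sqrt \<kappa> * dist (fst p) (snd p)"] conjI ballI)
    show "sqrt \<kappa> * dist (fst p) (snd p) < pi / 2" using p dK by auto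
    fix v w assume "v \<in> X" "w \<in> X"
    then show "sqrt \<kappa> * dist v w \<le> sqrt \<kappa> * dist (fst p) (snd p)"
      using p(2)[rule_format, of "(v, w)"] Kpos by simp
  qed (use Kpos in simp)
qed

lemma Psi_eq: "Psi \<kappa> x y = phi (cos (sqrt \<kappa> * dist y x)) / \<kappa>"
  unfolding Psi_def phi_def by (simp add: diff_divide_distrib)

lemma Psi_self: "Psi \<kappa> x x = 0"
  unfolding Psi_eq phi_def by simp

lemma Psi_nonneg: "x \<in> X \<Longrightarrow> y \<in> X \<Longrightarrow> 0 \<le> Psi \<kappa> x y"
  unfolding Psi_eq using cosD[of y x] k by (simp add: phi_nonneg)

end

context catk begin

definition ismin :: "('a \<Rightarrow> ereal) \<Rightarrow> real \<Rightarrow> 'a \<Rightarrow> 'a \<Rightarrow> bool" where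
  "ismin g lam x y \<longleftrightarrow> y \<in> X \<and> (\<forall>z\<in>X. g y + ereal (Psi \<kappa> x y / lam) \<le> g z + ereal (Psi \<kappa> x z / lam))"

lemma Psi_tendsto:
  assumes "x \<in> X" "q \<in> X" "u \<longlonglongrightarrow> q"
  shows "(\<lambda>n. Psi \<kappa> x (u n)) \<longlonglongrightarrow> Psi \<kappa> x q"
proof -
  have "cos (sqrt \<kappa> * dist q x) \<noteq> 0" using cosD[OF assms(2,1)] by simp
  then show ?thesis unfolding Psi_def using assms(3) k
    by (intro tendsto_intros) auto
qed

lemma exists_min:
  assumes lsc: "lsc_on X g" and ninf: "\<forall>y\<in>X. g y \<noteq> -\<infinity>" and lam: "lam > 0"
    and x: "x \<in> X" and ne: "X \<noteq> {}"
  shows "\<exists>y. ismin g lam x y"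
proof -
  define h where "h = (\<lambda>y. g y + ereal (Psi \<kappa> x y / lam))"
  define m where "m = Inf (h ` X)"
  obtain u where u: "\<forall>n. u n \<in> h ` X" "u \<longlonglongrightarrow> m"
    using Inf_as_limit[of "h ` X"] ne unfolding m_def by auto
  have "\<forall>n. \<exists>y. y \<in> X \<and> u n = h y" using u(1) by blast
  then obtain v where "\<forall>n. v n \<in> X \<and> u n = h (v n)" using choice[of "\<lambda>n y. y \<in> X \<and> u n = h y"] by blast
  then have v: "\<And>n. v n \<in> X" "\<And>n. u n = h (v n)" by auto
  obtain q r where qr: "q \<in> X" "strict_mono r" "(v \<circ> r) \<longlonglongrightarrow> q"
    using seq_compactE[OF compact_imp_seq_compact[OF cpt], of v] v(1) by blast
  have hm: "(\<lambda>n. h (v (r n))) \<longlonglongrightarrow> m"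
    using LIMSEQ_subseq_LIMSEQ[OF u(2) qr(2)] v(2) by (simp add: o_def)
  have pt: "(\<lambda>n. ereal (Psi \<kappa> x (v (r n)) / lam)) \<longlonglongrightarrow> ereal (Psi \<kappa> x q / lam)"
    using Psi_tendsto[OF x qr(1) qr(3)] lam by (intro tendsto_intros) (auto simp: o_def)
  have gv: "(\<lambda>n. g (v (r n))) = (\<lambda>n. h (v (r n)) - ereal (Psi \<kappa> x (v (r n)) / lam))"
  proof (rule ext)
    fix n show "g (v (r n)) = h (v (r n)) - ereal (Psi \<kappa> x (v (r n)) / lam)"
      by (cases "g (v (r n))") (simp_all add: h_def)
  qed
  have gl: "(\<lambda>n. g (v (r n))) \<longlonglongrightarrow> m - ereal (Psi \<kappa> x q / lam)"
    unfolding gv by (intro tendsto_diff_ereal_general[OF hm pt]) auto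
  have "g q \<le> liminf (\<lambda>n. g (v (r n)))"
    using lsc qr v(1) unfolding lsc_on_def by (auto simp: o_def)
  also have "\<dots> = m - ereal (Psi \<kappa> x q / lam)"
    by (rule lim_imp_Liminf[OF _ gl]) simp
  finally have "h q \<le> m" unfolding h_def
    by (cases m; cases "g q") auto
  moreover have "m \<le> h z" if "z \<in> X" for z using that unfolding m_def by (auto intro: Inf_lower)
  ultimately show ?thesis unfolding ismin_def h_def using qr(1) by (intro exI[of _ q]) (auto intro: order.trans)
qed

end

context catk begin

lemma geo_in_X: "geodesic_in X a b \<gamma> \<Longrightarrow> 0 \<le> s \<Longrightarrow> s \<le> dist a b \<Longrightarrow> \<gamma> s \<in> X"
  unfolding geodesic_in_def by auto

lemma ismin_fin:
  assumes "ismin g lam x y" "proper_on X g" "\<forall>y\<in>X. g y \<noteq> -\<infinity>"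
  shows "\<bar>g y\<bar> \<noteq> \<infinity>"
proof -
  obtain z where z: "z \<in> X" "g z \<noteq> \<infinity>" using assms(2) unfolding proper_on_def by blast
  have "g y + ereal (Psi \<kappa> x y / lam) \<le> g z + ereal (Psi \<kappa> x z / lam)"
    using assms(1) z unfolding ismin_def by auto
  moreover have "g z + ereal (Psi \<kappa> x z / lam) < \<infinity>" using z(2) by (cases "g z") auto
  ultimately have "g y \<noteq> \<infinity>" by auto
  moreover have "g y \<noteq> -\<infinity>" using assms(1,3) unfolding ismin_def by auto
  ultimately show ?thesis by auto
qed

lemma unique_min:
  assumes conv: "geo_convex X g" and prp: "proper_on X g" and ninf: "\<forall>y\<in>X. g y \<noteq> -\<infinity>"
    and lam: "lam > 0" and x: "x \<in> X"
    and m1: "ismin g lam x y1" and m2: "ismin g lam x y2"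
  shows "y1 = y2"
proof (rule ccontr)
  assume ne: "y1 \<noteq> y2"
  have y1: "y1 \<in> X" and y2: "y2 \<in> X" using m1 m2 unfolding ismin_def by auto
  obtain a1 where a1: "g y1 = ereal a1" using ismin_fin[OF m1 prp ninf] by (cases "g y1") auto
  obtain a2 where a2: "g y2 = ereal a2" using ismin_fin[OF m2 prp ninf] by (cases "g y2") auto
  define P1 where "P1 = Psi \<kappa> x y1 / lam"
  define P2 where "P2 = Psi \<kappa> x y2 / lam"
  have e12: "a1 + P1 \<le> a2 + P2" using m1 y2 a1 a2 unfolding ismin_def P1_def P2_def by fastforce
  have e21: "a2 + P2 \<le> a1 + P1" using m2 y1 a1 a2 unfolding ismin_def P1_def P2_def by fastforce
  obtain \<gamma> where \<gamma>: "geodesic_in X y1 y2 \<gamma>" using cat_geod[OF k cat diam y1 y2] by blast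
  define d where "d = dist y1 y2"
  have dpos: "d > 0" using ne by (simp add: d_def)
  define w where "w = \<gamma> (1/2 * d)"
  have wX: "w \<in> X" unfolding w_def using geo_in_X[OF \<gamma>, of "1/2 * d"] dpos by (simp add: d_def)
  have cv: "\<forall>t\<in>{0..1}. g (\<gamma> (t * dist y1 y2)) \<le> ereal (1 - t) * g y1 + ereal t * g y2"
    using conv y1 y2 \<gamma> unfolding geo_convex_def by blast
  have "g w \<le> ereal (1 - 1/2) * g y1 + ereal (1/2) * g y2"
    unfolding w_def d_def by (rule cv[rule_format]) simp
  then have gw: "g w \<le> ereal ((a1 + a2) / 2)" using a1 a2 by (simp add: add_divide_distrib)
  define A where "A = sqrt \<kappa> * d"
  have A: "0 < A" "A < pi / 2" using dpos Kpos dK[OF y1 y2] by (auto simp: A_def d_def)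
  define c1 where "c1 = cos (sqrt \<kappa> * dist y1 x)"
  define c2 where "c2 = cos (sqrt \<kappa> * dist y2 x)"
  define cw where "cw = cos (sqrt \<kappa> * dist w x)"
  have cpos: "0 < c1" "0 < c2" "0 < cw" using cosD y1 y2 wX x by (auto simp: c1_def c2_def cw_def)
  have G: "c1 * sin (A - A / 2) + c2 * sin (A / 2) \<le> cw * sin A"
    using cat_G[OF k cat diam x y1 y2 \<gamma>, of "1/2 * d"] dpos
    unfolding c1_def c2_def cw_def A_def w_def d_def by (simp add: algebra_simps)
  have sA: "sin A = 2 * sin (A / 2) * cos (A / 2)" using sin_double[of "A/2"] by simp
  have sh: "sin (A / 2) > 0" using A by (intro sin_gt_zero) auto
  have "(c1 + c2) * sin (A / 2) \<le> (2 * cw * cos (A / 2)) * sin (A / 2)"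
    using G sA by (simp add: algebra_simps)
  then have "c1 + c2 \<le> 2 * cw * cos (A / 2)" using sh by simp
  moreover have "cos (A / 2) < cos 0" using A by (intro cos_monotone_0_pi) auto
  moreover have "2 * cw * cos (A / 2) < 2 * cw * 1"
    using cpos \<open>cos (A / 2) < cos 0\<close> by (intro mult_strict_left_mono) auto
  ultimately have "c1 + c2 < 2 * cw" by linarith
  then have cw_gt: "(c1 + c2) / 2 < cw" by simp
  have "phi cw < phi ((c1 + c2) / 2)" using cw_gt cpos by (intro phi_strict) auto
  also have "\<dots> \<le> (phi c1 + phi c2) / 2" using cpos by (intro phi_conv) auto
  finally have "Psi \<kappa> x w < (Psi \<kappa> x y1 + Psi \<kappa> x y2) / 2"
    using k unfolding Psi_eq c1_def c2_def cw_def by (simp add: field_simps)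
  then have pw: "Psi \<kappa> x w / lam < (P1 + P2) / 2"
    using lam unfolding P1_def P2_def by (simp add: field_simps)
  have "g y1 + ereal (Psi \<kappa> x y1 / lam) \<le> g w + ereal (Psi \<kappa> x w / lam)"
    using m1 wX unfolding ismin_def by auto
  also have "\<dots> \<le> ereal ((a1 + a2) / 2 + Psi \<kappa> x w / lam)" using gw by (cases "g w") auto
  finally have "a1 + P1 \<le> (a1 + a2) / 2 + Psi \<kappa> x w / lam" using a1 by (simp add: P1_def)
  then show False using pw e12 e21 by (simp add: field_simps)
qed

lemma resolvent_ok:
  assumes conv: "geo_convex X g" and prp: "proper_on X g" and ninf: "\<forall>y\<in>X. g y \<noteq> -\<infinity>"
    and lsc: "lsc_on X g" and lam: "lam > 0" and x: "x \<in> X"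
  shows "ismin g lam x (resolvent \<kappa> X g lam x)"
proof -
  have "\<exists>!y. ismin g lam x y"
    using exists_min[OF lsc ninf lam x] x unique_min[OF conv prp ninf lam x] by blast
  then show ?thesis unfolding resolvent_def ismin_def[symmetric] by (rule theI')
qed

end

lemma one_minus_cos_le: "0 \<le> D \<Longrightarrow> 1 - cos D \<le> (D::real)"
proof -
  assume D: "0 \<le> D"
  have "0 - 1 + cos 0 \<le> D - 1 + cos D"
  proof (rule DERIV_nonneg_imp_nondecreasing[OF D])
    fix t :: real assume "0 \<le> t" "t \<le> D"
    have "((\<lambda>t. t - 1 + cos t) has_real_derivative 1 - sin t) (at t)"
      by (auto intro!: derivative_eq_intros)
    moreover have "0 \<le> 1 - sin t" by simp
    ultimately show "\<exists>y. ((\<lambda>t. t - 1 + cos t) has_real_derivative y) (at t) \<and> 0 \<le> y" by blast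
  qed
  then show ?thesis by simp
qed

context catk begin

lemma opt_ineq:
  assumes conv: "geo_convex X g" and lam: "lam > 0" and x: "x \<in> X"
    and mn: "ismin g lam x x'" and y: "y \<in> X" and ga: "g x' = ereal a" and gb: "g y = ereal b"
  shows "(sqrt \<kappa> * dist x' y)^2 \<le> (sqrt \<kappa> * dist x y)^2
      - 2 * \<kappa> * lam * (cos (sqrt \<kappa> * dist x' x) / (1 + (cos (sqrt \<kappa> * dist x' x))^2)) * (a - b)"
proof -
  have x': "x' \<in> X" using mn unfolding ismin_def by auto
  define c where "c = cos (sqrt \<kappa> * dist x' x)"
  define cy where "cy = cos (sqrt \<kappa> * dist y x)"
  have c: "0 < c" "c \<le> 1" using cosD[OF x' x] by (auto simp: c_def)
  have cy: "0 < cy" using cosD[OF y x] by (auto simp: cy_def)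
  show ?thesis
  proof (cases "x' = y")
    case True
    then have "a = b" using ga gb by simp
    then show ?thesis using True c_def by simp
  next
    case False
    define th where "th = sqrt \<kappa> * dist x' y"
    have th: "0 < th" "th < pi / 2" using False Kpos dK[OF x' y] by (auto simp: th_def)
    have sth: "sin th > 0" using th by (intro sin_gt_zero) auto
    obtain \<gamma> where \<gamma>: "geodesic_in X x' y \<gamma>" using cat_geod[OF k cat diam x' y] by blast
    have cv: "\<forall>t\<in>{0..1}. g (\<gamma> (t * dist x' y)) \<le> ereal (1 - t) * g x' + ereal t * g y"
      using conv x' y \<gamma> unfolding geo_convex_def by blast
    have H: "t * (\<kappa> * lam * (a - b)) \<le> (1 / ((c * sin ((1 - t) * th) + cy * sin (t * th)) / sin th)
                 - (c * sin ((1 - t) * th) + cy * sin (t * th)) / sin th) - (1 / c - c)"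
      if t: "0 < t" "t \<le> 1" for t
    proof -
      define s where "s = t * dist x' y"
      have s: "0 \<le> s" "s \<le> dist x' y" using t by (auto simp: s_def mult_left_le_one_le)
      define w where "w = \<gamma> s"
      have wX: "w \<in> X" using geo_in_X[OF \<gamma> s] by (simp add: w_def)
      have gw: "g w \<le> ereal ((1 - t) * a + t * b)"
        using cv[rule_format, of t] t ga gb by (simp add: w_def s_def)
      have "g x' + ereal (Psi \<kappa> x x' / lam) \<le> g w + ereal (Psi \<kappa> x w / lam)"
        using mn wX unfolding ismin_def by auto
      also have "\<dots> \<le> ereal ((1 - t) * a + t * b + Psi \<kappa> x w / lam)"
        using gw by (cases "g w") auto
      finally have "a + Psi \<kappa> x x' / lam \<le> (1 - t) * a + t * b + Psi \<kappa> x w / lam" using ga by simp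
      then have "t * (a - b) \<le> Psi \<kappa> x w / lam - Psi \<kappa> x x' / lam"
        by (simp add: algebra_simps)
      then have i1: "t * (a - b) \<le> (Psi \<kappa> x w - Psi \<kappa> x x') / lam"
        by (simp add: diff_divide_distrib)
      define cw where "cw = cos (sqrt \<kappa> * dist w x)"
      have G: "c * sin (th - sqrt \<kappa> * s) + cy * sin (sqrt \<kappa> * s) \<le> cw * sin th"
        using cat_G[OF k cat diam x x' y \<gamma> s] unfolding c_def cy_def cw_def th_def w_def .
      have ks: "sqrt \<kappa> * s = t * th" by (simp add: s_def th_def)
      have "th - t * th = (1 - t) * th" by (simp add: algebra_simps)
      then have G': "c * sin ((1 - t) * th) + cy * sin (t * th) \<le> cw * sin th"
        using G ks by simp
      define m where "m = (c * sin ((1 - t) * th) + cy * sin (t * th)) / sin th"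
      have tth: "t * th \<le> th" "(1 - t) * th \<le> th" using t th by (simp_all add: mult_left_le_one_le)
      have "t * th < pi" "(1 - t) * th \<le> pi" using tth th by linarith+
      then have "sin (t * th) > 0" using t th by (intro sin_gt_zero) auto
      moreover have "sin ((1 - t) * th) \<ge> 0" using t th \<open>(1 - t) * th \<le> pi\<close> by (intro sin_ge_zero) auto
      ultimately have mpos: "m > 0" using c cy sth unfolding m_def
        by (intro divide_pos_pos add_nonneg_pos mult_nonneg_nonneg mult_pos_pos) auto
      have mle: "m \<le> cw" using G' sth unfolding m_def by (simp add: divide_le_eq)
      have "phi cw \<le> phi m" by (rule phi_mono[OF mpos mle])
      then have "Psi \<kappa> x w - Psi \<kappa> x x' \<le> (phi m - phi c) / \<kappa>"
        unfolding Psi_eq cw_def[symmetric] c_def[symmetric] using k by (simp add: field_simps)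
      with i1 have "t * (a - b) \<le> (phi m - phi c) / \<kappa> / lam"
        using lam by (smt (verit) divide_right_mono)
      then have "t * (a - b) * (\<kappa> * lam) \<le> phi m - phi c" using k lam by (simp add: field_simps)
      then show ?thesis unfolding phi_def m_def by (simp add: algebra_simps)
    qed
    have A: "\<kappa> * lam * (a - b) \<le> (1 / c^2 + 1) * (c * cos th - cy) * th / sin th"
      by (rule opt_limit[OF c(1) cy sth H])
    define rho where "rho = c / (1 + c^2)"
    have rho: "rho > 0" using c unfolding rho_def by (intro divide_pos_pos) (auto intro: add_pos_nonneg)
    have "rho * (\<kappa> * lam * (a - b)) \<le> rho * ((1 / c^2 + 1) * (c * cos th - cy) * th / sin th)"
      using A rho by (intro mult_left_mono) auto
    also have "\<dots> = (rho * (1 / c^2 + 1)) * (c * cos th - cy) * th / sin th"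
      by (simp add: algebra_simps)
    also have r1: "rho * (1 / c^2 + 1) = 1 / c"
    proof -
      have "1 + c^2 > 0" by (simp add: add_pos_nonneg)
      moreover have "c * c + c * (c * (c * c)) > 0" using c by (simp add: add_pos_pos mult_pos_pos)
      ultimately show ?thesis using c by (simp add: rho_def field_simps power2_eq_square)
    qed
    also have "1 / c * (c * cos th - cy) * th / sin th = (cos th - cy / c) * th / sin th"
      using c by (simp add: field_simps)
    also have "\<dots> \<le> (cos th - cy) * th / sin th"
    proof -
      have "cy \<le> cy / c" using c cy by (simp add: le_divide_eq)
      then show ?thesis using th sth by (intro divide_right_mono mult_right_mono) auto
    qed
    also have "\<dots> \<le> ((sqrt \<kappa> * dist x y)^2 - th^2) / 2"
    proof -
      have "cos (sqrt \<kappa> * dist x y) = cy" by (simp add: cy_def dist_commute)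
      moreover have "0 \<le> sqrt \<kappa> * dist x y" "sqrt \<kappa> * dist x y \<le> pi / 2"
        using Kpos dK[OF x y] by auto
      ultimately have "(cos th - cy) * th \<le> ((sqrt \<kappa> * dist x y)^2 - th^2) / 2 * sin th"
        using lemM[of th "sqrt \<kappa> * dist x y"] th by auto
      then show ?thesis using sth by (simp add: divide_le_eq)
    qed
    finally show ?thesis unfolding th_def rho_def c_def by (simp add: algebra_simps)
  qed
qed

lemma step_ineq:
  assumes mn: "ismin g lam x x'" and x: "x \<in> X" and lam: "lam > 0"
    and ga: "g x' = ereal a" and gb: "g x = ereal b"
  shows "Psi \<kappa> x x' \<le> lam * (b - a)"
proof -
  have "g x' + ereal (Psi \<kappa> x x' / lam) \<le> g x + ereal (Psi \<kappa> x x / lam)"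
    using mn x unfolding ismin_def by auto
  then have "a + Psi \<kappa> x x' / lam \<le> b" using ga gb by (simp add: Psi_self)
  then show ?thesis using lam by (simp add: field_simps)
qed

lemma Psi_lower:
  assumes "v \<in> X" "w \<in> X" "0 < c0" "\<forall>v\<in>X. \<forall>w\<in>X. c0 \<le> cos (sqrt \<kappa> * dist v w)"
  shows "(c0 * (sqrt \<kappa> * dist v w))^2 \<le> \<kappa> * Psi \<kappa> v w"
proof -
  define D where "D = sqrt \<kappa> * dist v w"
  define c where "c = cos D"
  have D: "0 \<le> D" "D \<le> pi / 2" using Kpos dK[OF assms(1,2)] by (auto simp: D_def)
  have c: "0 < c" "c \<le> 1" using cosD[OF assms(2,1)] by (auto simp: c_def D_def dist_commute)
  have cc: "c0 \<le> c" using assms by (auto simp: c_def D_def)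
  have "c0 * D \<le> c * D" using cc D by (intro mult_right_mono) auto
  also have "\<dots> \<le> sin D" using xcos_le_sin[OF D] by (simp add: c_def mult.commute)
  finally have s1: "c0 * D \<le> sin D" .
  have "(c0 * D)^2 \<le> (sin D)^2" using s1 assms(3) D by (intro power_mono) auto
  also have "\<dots> = 1 - c^2" by (simp add: c_def sin_squared_eq)
  also have "\<dots> \<le> (1 - c^2) / c"
  proof -
    have "0 \<le> 1 - c^2" using c by (simp add: power_le_one)
    then have "(1 - c^2) * c \<le> 1 - c^2" using c by (intro mult_left_le) auto
    then show ?thesis using c by (simp add: le_divide_eq)
  qed
  also have "\<dots> = phi c" by (simp add: phi_def field_simps power2_eq_square c(1)[THEN less_imp_neq, symmetric])
  also have "\<dots> = \<kappa> * Psi \<kappa> v w" using k by (simp add: Psi_eq c_def D_def dist_commute)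
  finally show ?thesis by (simp add: D_def)
qed

end

lemma fejer_conv:
  fixes V w b :: "nat \<Rightarrow> real"
  assumes V0: "\<And>j. 0 \<le> V j" and w0: "\<And>j. 0 \<le> w j" and step: "\<And>j. V (Suc j) \<le> V j - w j + b j"
    and sb: "summable b" and b0: "\<And>j. 0 \<le> b j"
  shows "convergent V \<and> summable w"
proof -
  have part: "V n + (\<Sum>j<n. w j) \<le> V 0 + (\<Sum>j<n. b j)" for n
  proof (induction n)
    case (Suc n) then show ?case using step[of n] by simp
  qed simp
  have bs: "(\<Sum>j<n. b j) \<le> suminf b" for n using sb b0 by (intro sum_le_suminf) auto
  have sw: "summable w"
  proof (rule summableI_nonneg_bounded[where x = "V 0 + suminf b"])
    fix n show "(\<Sum>j<n. w j) \<le> V 0 + suminf b" using part[of n] bs[of n] V0[of n] by linarith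
  qed (rule w0)
  define S where "S n = V n + (\<Sum>j<n. w j - b j)" for n
  have dec: "S (Suc n) \<le> S n" for n using step[of n] by (simp add: S_def)
  then have decseq: "decseq S" by (simp add: decseq_SucI)
  have lo: "- suminf b \<le> S n" for n
  proof -
    have "(\<Sum>j<n. w j - b j) = (\<Sum>j<n. w j) - (\<Sum>j<n. b j)" by (simp add: sum_subtractf)
    moreover have "0 \<le> (\<Sum>j<n. w j)" using w0 by (simp add: sum_nonneg)
    ultimately show ?thesis using bs[of n] V0[of n] by (simp add: S_def)
  qed
  have up: "S n \<le> S 0" for n using decseq by (simp add: decseq_def)
  have "Bseq S"
  proof (rule BseqI'[where K = "\<bar>S 0\<bar> + suminf b"])
    fix n
    show "norm (S n) \<le> \<bar>S 0\<bar> + suminf b"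
      unfolding real_norm_def abs_le_iff using lo[of n] up[of n] suminf_nonneg[OF sb b0]
        abs_ge_self[of "S 0"] abs_ge_minus_self[of "S 0"] by linarith
  qed
  moreover have "monoseq S" using decseq unfolding monoseq_def decseq_def by (auto simp: antimono_def)
  ultimately have cS: "convergent S" by (rule Bseq_monoseq_convergent)
  have "summable (\<lambda>j. w j - b j)" using sw sb by (rule summable_diff)
  then have cP: "convergent (\<lambda>n. \<Sum>j<n. w j - b j)" by (simp add: summable_iff_convergent)
  have "V = (\<lambda>n. S n - (\<Sum>j<n. w j - b j))" by (simp add: S_def fun_eq_iff)
  then have "convergent V" using convergent_diff[OF cS cP] by simp
  then show ?thesis using sw by simp
qed

lemma small_often:
  fixes lam u :: "nat \<Rightarrow> real"
  assumes s: "summable (\<lambda>j. lam j * u j)" and u0: "\<And>j. 0 \<le> u j" and l0: "\<And>j. 0 < lam j"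
    and ns: "\<not> summable lam" and e: "e > 0"
  shows "\<exists>j\<ge>J. u j < e"
proof (rule ccontr)
  assume "\<not> ?thesis"
  then have ge: "\<And>j. j \<ge> J \<Longrightarrow> e \<le> u j" by (meson not_le)
  have "summable (\<lambda>j. lam j * u j / e)" using s by (rule summable_divide)
  moreover have "norm (lam j) \<le> lam j * u j / e" if "j \<ge> J" for j
  proof -
    have "lam j * e \<le> lam j * u j" using ge[OF that] l0[of j] by (intro mult_left_mono) auto
    then show ?thesis using l0[of j] e by (simp add: field_simps)
  qed
  ultimately have "summable lam" by (rule summable_comparison_test')
  with ns show False ..
qed

lemma liminf_add_lb:
  fixes a b :: "nat \<Rightarrow> real"
  assumes "\<And>n. la \<le> a n" "\<And>n. lb \<le> b n"
  shows "liminf (\<lambda>n. ereal (a n)) + liminf (\<lambda>n. ereal (b n)) \<le> liminf (\<lambda>n. ereal (a n + b n))"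
proof -
  define A where "A n = ereal (a n - la)" for n
  define B where "B n = ereal (b n - lb)" for n
  have L: "liminf A + liminf B \<le> liminf (\<lambda>n. A n + B n)"
    by (rule Liminf_add_le) (use assms in \<open>auto simp: A_def B_def\<close>)
  have "liminf (\<lambda>n. ereal (a n)) = liminf A + ereal la"
  proof -
    have "(\<lambda>n. ereal (a n)) = (\<lambda>n. A n + ereal la)" by (simp add: A_def fun_eq_iff)
    then show ?thesis by (simp add: Liminf_add_ereal_right)
  qed
  moreover have "liminf (\<lambda>n. ereal (b n)) = liminf B + ereal lb"
  proof -
    have "(\<lambda>n. ereal (b n)) = (\<lambda>n. B n + ereal lb)" by (simp add: B_def fun_eq_iff)
    then show ?thesis by (simp add: Liminf_add_ereal_right)
  qed
  moreover have "liminf (\<lambda>n. ereal (a n + b n)) = liminf (\<lambda>n. A n + B n) + ereal (la + lb)"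
  proof -
    have "(\<lambda>n. ereal (a n + b n)) = (\<lambda>n. (A n + B n) + ereal (la + lb))" by (simp add: A_def B_def fun_eq_iff)
    then show ?thesis by (simp add: Liminf_add_ereal_right)
  qed
  moreover have "(liminf A + ereal la) + (liminf B + ereal lb) = (liminf A + liminf B) + ereal (la + lb)"
  proof -
    have "ereal (la + lb) = ereal la + ereal lb" by simp
    then show ?thesis by (simp only: ac_simps)
  qed
  ultimately show ?thesis using add_right_mono[OF L, of "ereal (la + lb)"] by simp
qed

lemma liminf_sum_lb:
  fixes a :: "'i \<Rightarrow> nat \<Rightarrow> real"
  assumes "finite I" "\<And>i n. i \<in> I \<Longrightarrow> l i \<le> a i n"
  shows "(\<Sum>i\<in>I. liminf (\<lambda>n. ereal (a i n))) \<le> liminf (\<lambda>n. ereal (\<Sum>i\<in>I. a i n))"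
  using assms
proof (induction I rule: finite_induct)
  case empty
  have "liminf (\<lambda>n::nat. ereal 0) = ereal 0" by (rule Liminf_const) simp
  then show ?case by (simp add: zero_ereal_def)
next
  case (insert i I)
  have "(\<Sum>i\<in>insert i I. liminf (\<lambda>n. ereal (a i n))) =
        liminf (\<lambda>n. ereal (a i n)) + (\<Sum>i\<in>I. liminf (\<lambda>n. ereal (a i n)))"
    using insert by simp
  also have "\<dots> \<le> liminf (\<lambda>n. ereal (a i n)) + liminf (\<lambda>n. ereal (\<Sum>i\<in>I. a i n))"
    using insert by (intro add_left_mono) auto
  also have "\<dots> \<le> liminf (\<lambda>n. ereal (a i n + (\<Sum>i\<in>I. a i n)))"
    by (rule liminf_add_lb[where la = "l i" and lb = "\<Sum>i\<in>I. l i"]) (use insert in \<open>auto intro: sum_mono\<close>)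
  also have "\<dots> = liminf (\<lambda>n. ereal (\<Sum>i\<in>insert i I. a i n))" using insert by simp
  finally show ?case .
qed

primrec pick :: "(nat \<Rightarrow> nat \<Rightarrow> nat) \<Rightarrow> nat \<Rightarrow> nat" where
  "pick ch 0 = ch 0 0"
| "pick ch (Suc k) = ch (Suc (pick ch k)) (Suc k)"

locale alg = catk +
  fixes N :: nat and f :: "nat \<Rightarrow> 'a \<Rightarrow> ereal" and lam :: "nat \<Rightarrow> real"
    and x :: "nat \<Rightarrow> 'a" and L :: real
  assumes N: "N \<ge> 1"
    and fin: "\<forall>i\<in>{1..N}. \<forall>y\<in>X. f i y \<noteq> -\<infinity>"
    and f_proper: "\<forall>i\<in>{1..N}. proper_on X (f i)"
    and f_conv: "\<forall>i\<in>{1..N}. geo_convex X (f i)"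
    and f_lsc: "\<forall>i\<in>{1..N}. lsc_on X (f i)"
    and attains: "\<exists>z\<in>X. \<forall>y\<in>X. (\<Sum>i=1..N. f i z) \<le> (\<Sum>i=1..N. f i y)"
    and x0: "x 0 \<in> X"
    and lam_pos: "\<forall>j. lam j > 0"
    and lam_div: "\<not> summable lam"
    and lam_sq: "summable (\<lambda>j. (lam j)\<^sup>2)"
    and x_step: "\<forall>j. \<forall>i\<in>{1..N}. x (j * N + i) = resolvent \<kappa> X (f i) (lam j) (x (j * N + i - 1))"
    and L: "L > 0"
    and Lip: "\<forall>j. \<forall>i\<in>{1..N}.
        f i (x (j * N)) \<le> f i (x (j * N + i)) + ereal (L * dist (x (j * N)) (x (j * N + i))) \<and>
        f i (x (j * N + i - 1)) \<le> f i (x (j * N + i)) + ereal (L * dist (x (j * N + i - 1)) (x (j * N + i)))"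
begin

lemma decomp: "Suc m = (m div N) * N + (m mod N + 1) \<and> m mod N + 1 \<in> {1..N}
   \<and> (m div N) * N + (m mod N + 1) - 1 = m"
proof -
  have "m mod N < N" using N by simp
  then show ?thesis by (simp add: add.commute)
qed

lemma xX: "x n \<in> X"
proof (induction n)
  case 0 then show ?case by (rule x0)
next
  case (Suc m)
  define j where "j = m div N"
  define i where "i = m mod N + 1"
  have d: "Suc m = j * N + i" "i \<in> {1..N}" "j * N + i - 1 = m"
    using decomp[of m] by (simp_all add: j_def i_def)
  have "x (Suc m) = resolvent \<kappa> X (f i) (lam j) (x m)" using x_step d by metis
  moreover have "ismin (f i) (lam j) (x m) (resolvent \<kappa> X (f i) (lam j) (x m))"
    using d(2) f_conv f_proper fin f_lsc lam_pos Suc by (intro resolvent_ok) auto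
  ultimately show ?case unfolding ismin_def by simp
qed

lemma mn: "i \<in> {1..N} \<Longrightarrow> ismin (f i) (lam j) (x (j * N + i - 1)) (x (j * N + i))"
  using x_step f_conv f_proper fin f_lsc lam_pos xX by (auto intro: resolvent_ok)

lemma finA: assumes i: "i \<in> {1..N}" shows "\<bar>f i (x (j * N + i))\<bar> \<noteq> \<infinity>"
  by (rule ismin_fin[OF mn[OF i]]) (use f_proper fin i in auto)

lemma finB: "i \<in> {1..N} \<Longrightarrow> \<bar>f i (x (j * N))\<bar> \<noteq> \<infinity>"
proof -
  assume i: "i \<in> {1..N}"
  have "f i (x (j * N)) \<le> f i (x (j * N + i)) + ereal (L * dist (x (j * N)) (x (j * N + i)))"
    using Lip i by auto
  moreover have "f i (x (j * N + i)) + ereal (L * dist (x (j * N)) (x (j * N + i))) < \<infinity>"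
    using finA[OF i, of j] by (cases "f i (x (j * N + i))") auto
  moreover have "f i (x (j * N)) \<noteq> -\<infinity>" using fin i xX by auto
  ultimately show ?thesis by auto
qed

lemma finC: "i \<in> {1..N} \<Longrightarrow> \<bar>f i (x (j * N + i - 1))\<bar> \<noteq> \<infinity>"
proof -
  assume i: "i \<in> {1..N}"
  have "f i (x (j * N + i - 1)) \<le> f i (x (j * N + i)) + ereal (L * dist (x (j * N + i - 1)) (x (j * N + i)))"
    using Lip i by auto
  moreover have "f i (x (j * N + i)) + ereal (L * dist (x (j * N + i - 1)) (x (j * N + i))) < \<infinity>"
    using finA[OF i, of j] by (cases "f i (x (j * N + i))") auto
  moreover have "f i (x (j * N + i - 1)) \<noteq> -\<infinity>" using fin i xX by auto
  ultimately show ?thesis by auto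
qed

definition r :: "nat \<Rightarrow> 'a \<Rightarrow> real" where "r i y = real_of_ereal (f i y)"

lemma r_eq: "\<bar>f i y\<bar> \<noteq> \<infinity> \<Longrightarrow> f i y = ereal (r i y)"
  unfolding r_def by (cases "f i y") auto

definition cz :: real where
  "cz = (SOME c. 0 < c \<and> (\<forall>v\<in>X. \<forall>w\<in>X. c \<le> cos (sqrt \<kappa> * dist v w)))"

lemma cz: "0 < cz \<and> (\<forall>v\<in>X. \<forall>w\<in>X. cz \<le> cos (sqrt \<kappa> * dist v w))"
proof -
  obtain \<delta> where d: "0 \<le> \<delta>" "\<delta> < pi / 2" "\<forall>v\<in>X. \<forall>w\<in>X. sqrt \<kappa> * dist v w \<le> \<delta>"
    using delta by blast
  have "0 < cos \<delta> \<and> (\<forall>v\<in>X. \<forall>w\<in>X. cos \<delta> \<le> cos (sqrt \<kappa> * dist v w))"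
  proof (intro conjI ballI)
    show "0 < cos \<delta>" using d by (intro cos_gt_zero_pi) auto
    fix v w assume "v \<in> X" "w \<in> X"
    then show "cos \<delta> \<le> cos (sqrt \<kappa> * dist v w)"
      using d Kpos by (intro cos_monotone_0_pi_le) auto
  qed
  then show ?thesis unfolding cz_def by (rule someI)
qed

definition Mp :: real where "Mp = phi cz / \<kappa>"

lemma Psi_upper: "v \<in> X \<Longrightarrow> w \<in> X \<Longrightarrow> Psi \<kappa> v w \<le> Mp"
  unfolding Psi_eq Mp_def using cz k by (intro divide_right_mono phi_mono) auto

definition C :: real where "C = L / cz^2"

lemma step_bound: "i \<in> {1..N} \<Longrightarrow> dist (x (j * N + i - 1)) (x (j * N + i)) \<le> C * lam j"
proof -
  assume i: "i \<in> {1..N}"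
  define u where "u = x (j * N + i - 1)"
  define v where "v = x (j * N + i)"
  define d where "d = dist u v"
  have uv: "u \<in> X" "v \<in> X" using xX by (simp_all add: u_def v_def)
  have ga: "f i v = ereal (r i v)" unfolding v_def by (rule r_eq[OF finA[OF i]])
  have gb: "f i u = ereal (r i u)" unfolding u_def by (rule r_eq[OF finC[OF i]])
  have "Psi \<kappa> u v \<le> lam j * (r i u - r i v)"
    using step_ineq[OF mn[OF i, of j, folded u_def v_def] uv(1) _ ga gb] lam_pos by auto
  moreover have "r i u \<le> r i v + L * d"
  proof -
    have "f i u \<le> f i v + ereal (L * d)" using Lip i unfolding u_def v_def d_def by blast
    then show ?thesis using ga gb by simp
  qed
  ultimately have "Psi \<kappa> u v \<le> lam j * (L * d)" using lam_pos
    by (smt (verit) mult_left_mono)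
  moreover have "(cz * (sqrt \<kappa> * d))^2 \<le> \<kappa> * Psi \<kappa> u v"
    using Psi_lower[OF uv] cz by (simp add: d_def)
  ultimately have "(cz * (sqrt \<kappa> * d))^2 \<le> \<kappa> * (lam j * (L * d))"
    using k by (smt (verit) mult_left_mono)
  moreover have "(cz * (sqrt \<kappa> * d))^2 = \<kappa> * (cz^2 * d * d)"
  proof -
    have sq: "(sqrt \<kappa>)^2 = \<kappa>" using k by simp
    have "(cz * (sqrt \<kappa> * d))^2 = cz^2 * ((sqrt \<kappa>)^2 * d^2)" by (simp add: power_mult_distrib)
    also have "\<dots> = \<kappa> * (cz^2 * d * d)" unfolding sq by (simp add: power2_eq_square[of d] mult_ac)
    finally show ?thesis .
  qed
  ultimately have "\<kappa> * (cz^2 * d * d) \<le> \<kappa> * (lam j * (L * d))" by linarith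
  then have "cz^2 * d * d \<le> lam j * (L * d)" using k by simp
  then have e: "cz^2 * d * d \<le> (lam j * L) * d" by (simp add: mult_ac)
  show ?thesis
  proof (cases "d = 0")
    case True
    have "0 \<le> L * lam j / cz^2" using lam_pos[rule_format, of j] L by simp
    then show ?thesis using True by (simp add: u_def v_def d_def C_def)
  next
    case False
    then have "d > 0" by (simp add: d_def)
    then have "cz^2 * d \<le> lam j * L" using e by (simp add: mult.commute mult.left_commute)
    then show ?thesis using cz by (simp add: C_def d_def u_def v_def field_simps)
  qed
qed

lemma cum_bound: "i \<le> N \<Longrightarrow> dist (x (j * N)) (x (j * N + i)) \<le> i * C * lam j"
proof (induction i)
  case 0 then show ?case by simp
next
  case (Suc i)
  have "dist (x (j * N)) (x (j * N + Suc i)) \<le> dist (x (j * N)) (x (j * N + i)) + dist (x (j * N + i)) (x (j * N + Suc i))"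
    by (rule dist_triangle)
  also have "dist (x (j * N + i)) (x (j * N + Suc i)) \<le> C * lam j"
    using step_bound[of "Suc i" j] Suc.prems by simp
  finally show ?case using Suc by (simp add: algebra_simps)
qed

lemma f_lb: "i \<in> {1..N} \<Longrightarrow> \<exists>l. \<forall>y\<in>X. ereal l \<le> f i y"
proof -
  assume i: "i \<in> {1..N}"
  have "\<exists>q. ismin (f i) 1 (x 0) q" using i f_lsc fin xX[of 0] by (intro exists_min) auto
  then obtain q where q: "ismin (f i) 1 (x 0) q" by blast
  have qX: "q \<in> X" using q unfolding ismin_def by auto
  have fq: "f i q = ereal (r i q)" using ismin_fin[OF q] f_proper fin i by (intro r_eq) auto
  show ?thesis
  proof (intro exI ballI)
    fix y assume y: "y \<in> X"
    have "f i q + ereal (Psi \<kappa> (x 0) q / 1) \<le> f i y + ereal (Psi \<kappa> (x 0) y / 1)"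
      using q y unfolding ismin_def by auto
    then have "ereal (r i q + Psi \<kappa> (x 0) q - Psi \<kappa> (x 0) y) \<le> f i y"
      using fq by (cases "f i y") auto
    moreover have "r i q - Mp \<le> r i q + Psi \<kappa> (x 0) q - Psi \<kappa> (x 0) y"
      using Psi_upper[OF xX[of 0] y] Psi_nonneg[OF xX[of 0] qX] by simp
    ultimately show "ereal (r i q - Mp) \<le> f i y" by (meson ereal_less_eq(3) order_trans)
  qed
qed

end

context alg begin

definition RF :: "'a \<Rightarrow> real" where "RF y = (\<Sum>i=1..N. r i y)"

lemma F_eq: "(\<forall>i\<in>{1..N}. \<bar>f i y\<bar> \<noteq> \<infinity>) \<Longrightarrow> (\<Sum>i=1..N. f i y) = ereal (RF y)"
proof -
  assume a: "\<forall>i\<in>{1..N}. \<bar>f i y\<bar> \<noteq> \<infinity>"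
  have "(\<Sum>i=1..N. f i y) = (\<Sum>i=1..N. ereal (r i y))"
  proof (rule sum.cong)
    fix i assume "i \<in> {1..N}"
    with a have "\<bar>f i y\<bar> \<noteq> \<infinity>" by (rule bspec)
    then show "f i y = ereal (r i y)" by (rule r_eq)
  qed simp
  then show ?thesis by (simp add: RF_def)
qed

lemma min_fin:
  assumes p: "p \<in> X" and pmin: "\<forall>y\<in>X. (\<Sum>i=1..N. f i p) \<le> (\<Sum>i=1..N. f i y)"
  shows "\<forall>i\<in>{1..N}. \<bar>f i p\<bar> \<noteq> \<infinity>"
proof
  fix i assume i: "i \<in> {1..N}"
  have "\<forall>i\<in>{1..N}. \<bar>f i (x (0 * N))\<bar> \<noteq> \<infinity>" by (intro ballI finB)
  then have "(\<Sum>i=1..N. f i (x 0)) = ereal (RF (x 0))" using F_eq by simp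
  then have "(\<Sum>i=1..N. f i p) \<noteq> \<infinity>" using pmin xX[of 0] by (metis ereal_infty_less_eq(1) PInfty_neq_ereal(1))
  then have "f i p \<noteq> \<infinity>" using i by (auto simp: sum_Pinfty)
  moreover have "f i p \<noteq> -\<infinity>" using fin i p by auto
  ultimately show "\<bar>f i p\<bar> \<noteq> \<infinity>" by auto
qed

definition E1 :: real where "E1 = \<kappa> * L * N * C + \<kappa> * \<kappa> * C^2 * Mp"

lemma C_nonneg: "0 \<le> C" using L by (simp add: C_def)

lemma onestep:
  assumes p: "p \<in> X" and pf: "\<forall>i\<in>{1..N}. \<bar>f i p\<bar> \<noteq> \<infinity>" and i: "i \<in> {1..N}"
  shows "(sqrt \<kappa> * dist (x (j * N + i)) p)^2 \<le> (sqrt \<kappa> * dist (x (j * N + i - 1)) p)^2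
     - \<kappa> * lam j * (r i (x (j * N)) - r i p) + E1 * (lam j)^2"
proof -
  define u where "u = x (j * N + i - 1)"
  define v where "v = x (j * N + i)"
  define l where "l = lam j"
  have l: "0 < l" using lam_pos by (simp add: l_def)
  have uv: "u \<in> X" "v \<in> X" using xX by (simp_all add: u_def v_def)
  have ga: "f i v = ereal (r i v)" unfolding v_def by (rule r_eq[OF finA[OF i]])
  have gb: "f i p = ereal (r i p)" using pf i by (intro r_eq) auto
  define a where "a = r i v - r i p"
  define c where "c = cos (sqrt \<kappa> * dist v u)"
  define rho where "rho = c / (1 + c^2)"
  have c: "0 < c" "c \<le> 1" using cosD[OF uv(2,1)] by (auto simp: c_def)
  have opt: "(sqrt \<kappa> * dist v p)^2 \<le> (sqrt \<kappa> * dist u p)^2 - 2 * \<kappa> * l * rho * a"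
    using opt_ineq[OF _ l uv(1) mn[OF i, of j, folded u_def v_def l_def] p ga gb] f_conv i
    by (simp add: rho_def c_def a_def)
  have opc: "1 + c^2 > 0" by (simp add: add_pos_nonneg)
  have rho0: "0 \<le> rho" using c opc by (simp add: rho_def)
  have rho_half: "2 * rho \<le> 1"
  proof -
    have "2 * c \<le> 1 + c^2" using sum_squares_ge_zero[of "1 - c" 0] by (simp add: power2_eq_square algebra_simps)
    then show ?thesis using opc by (simp add: rho_def divide_le_eq)
  qed
  define D where "D = sqrt \<kappa> * dist v u"
  have D0: "0 \<le> D" using Kpos by (simp add: D_def)
  have DC: "D \<le> sqrt \<kappa> * C * l"
  proof -
    have "dist v u \<le> C * l" using step_bound[OF i, of j] by (simp add: dist_commute u_def v_def l_def)
    then show ?thesis using Kpos by (simp add: D_def mult.assoc mult_left_mono)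
  qed
  have one2: "1 - 2 * rho \<le> D^2"
  proof -
    have "1 - 2 * rho = (1 - c)^2 / (1 + c^2)" using opc by (simp add: rho_def field_simps power2_eq_square)
    also have "\<dots> \<le> (1 - c)^2" using opc by (simp add: divide_le_eq add_increasing2 mult_le_cancel_left1)
    also have "\<dots> \<le> D^2" using one_minus_cos_le[OF D0] c by (intro power_mono) (auto simp: c_def D_def)
    finally show ?thesis .
  qed
  have a_up: "a \<le> Mp / l"
  proof -
    have "f i v + ereal (Psi \<kappa> u v / l) \<le> f i p + ereal (Psi \<kappa> u p / l)"
      using mn[OF i, of j] p unfolding ismin_def u_def v_def l_def by auto
    then have "r i v + Psi \<kappa> u v / l \<le> r i p + Psi \<kappa> u p / l" using ga gb by simp
    moreover have "0 \<le> Psi \<kappa> u v / l" using Psi_nonneg[OF uv] l by simp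
    moreover have "Psi \<kappa> u p / l \<le> Mp / l" using Psi_upper[OF uv(1) p] l by (simp add: divide_right_mono)
    ultimately show ?thesis unfolding a_def by linarith
  qed
  have key: "- (2 * \<kappa> * l * rho * a) \<le> - (\<kappa> * l * a) + \<kappa> * \<kappa> * C^2 * Mp * l^2"
  proof (cases "a \<le> 0")
    case True
    have "\<kappa> * l * (-a) * (2 * rho) \<le> \<kappa> * l * (-a) * 1"
    proof (rule mult_left_mono)
      show "0 \<le> \<kappa> * l * (-a)" using True k l by (simp add: mult_nonneg_nonpos)
    qed (use rho_half in auto)
    moreover have "0 \<le> \<kappa> * \<kappa> * C^2 * Mp * l^2"
    proof -
      have "0 \<le> Mp" using Psi_upper[OF xX[of 0] xX[of 0]] by (simp add: Psi_self)
      then show ?thesis using k by (intro mult_nonneg_nonneg) auto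
    qed
    ultimately show ?thesis by (simp add: algebra_simps)
  next
    case False
    have "(1 - 2 * rho) * a \<le> D^2 * (Mp / l)"
      using False one2 a_up by (intro mult_mono) auto
    also have "\<dots> \<le> (sqrt \<kappa> * C * l)^2 * (Mp / l)"
    proof (rule mult_right_mono)
      show "D^2 \<le> (sqrt \<kappa> * C * l)^2" using DC D0 by (intro power_mono) auto
      show "0 \<le> Mp / l" using a_up False by linarith
    qed
    also have "\<dots> = \<kappa> * C^2 * Mp * l" using k l by (simp add: power_mult_distrib power2_eq_square)
    finally have "\<kappa> * l * ((1 - 2 * rho) * a) \<le> \<kappa> * l * (\<kappa> * C^2 * Mp * l)"
      using k l by (intro mult_left_mono) auto
    then show ?thesis by (simp add: algebra_simps power2_eq_square)
  qed
  have lip: "r i (x (j * N)) \<le> r i v + L * (N * C * l)"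
  proof -
    have "f i (x (j * N)) \<le> f i v + ereal (L * dist (x (j * N)) v)" using Lip i unfolding v_def by blast
    moreover have "f i (x (j * N)) = ereal (r i (x (j * N)))" by (rule r_eq[OF finB[OF i]])
    ultimately have "r i (x (j * N)) \<le> r i v + L * dist (x (j * N)) v" using ga by simp
    moreover have "dist (x (j * N)) v \<le> N * C * l"
    proof -
      have "dist (x (j * N)) v \<le> i * C * l" using cum_bound[of i j] i by (simp add: v_def l_def)
      also have "\<dots> \<le> N * C * l" using i C_nonneg l by (intro mult_right_mono) auto
      finally show ?thesis .
    qed
    ultimately show ?thesis using L by (smt (verit) mult_left_mono)
  qed
  have "- (\<kappa> * l * a) \<le> - (\<kappa> * l * (r i (x (j * N)) - r i p)) + \<kappa> * l * (L * (N * C * l))"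
  proof -
    have "r i (x (j * N)) - r i p \<le> a + L * (N * C * l)" using lip by (simp add: a_def)
    then have "\<kappa> * l * (r i (x (j * N)) - r i p) \<le> \<kappa> * l * (a + L * (N * C * l))"
      using k l by (intro mult_left_mono) auto
    then show ?thesis by (simp add: algebra_simps)
  qed
  moreover have "\<kappa> * l * (L * (N * C * l)) + \<kappa> * \<kappa> * C^2 * Mp * l^2 = E1 * l^2"
    by (simp add: E1_def power2_eq_square algebra_simps)
  ultimately show ?thesis using opt key unfolding u_def[symmetric] v_def[symmetric] l_def[symmetric]
    by (simp add: dist_commute)
qed

lemma cycle:
  assumes p: "p \<in> X" and pf: "\<forall>i\<in>{1..N}. \<bar>f i p\<bar> \<noteq> \<infinity>"
  shows "i \<le> N \<Longrightarrow> (sqrt \<kappa> * dist (x (j * N + i)) p)^2 \<le> (sqrt \<kappa> * dist (x (j * N)) p)^2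
     - \<kappa> * lam j * (\<Sum>k=1..i. r k (x (j * N)) - r k p) + i * E1 * (lam j)^2"
proof (induction i)
  case 0 then show ?case by simp
next
  case (Suc i)
  have si: "Suc i \<in> {1..N}" using Suc.prems by simp
  have "(sqrt \<kappa> * dist (x (j * N + Suc i)) p)^2 \<le> (sqrt \<kappa> * dist (x (j * N + i)) p)^2
     - \<kappa> * lam j * (r (Suc i) (x (j * N)) - r (Suc i) p) + E1 * (lam j)^2"
    using onestep[OF p pf si, of j] by simp
  also have "\<dots> \<le> (sqrt \<kappa> * dist (x (j * N)) p)^2
     - \<kappa> * lam j * (\<Sum>k=1..i. r k (x (j * N)) - r k p) + i * E1 * (lam j)^2
     - \<kappa> * lam j * (r (Suc i) (x (j * N)) - r (Suc i) p) + E1 * (lam j)^2"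
    using Suc by simp
  also have "\<dots> = (sqrt \<kappa> * dist (x (j * N)) p)^2
     - \<kappa> * lam j * (\<Sum>k=1..Suc i. r k (x (j * N)) - r k p) + Suc i * E1 * (lam j)^2"
    by (simp add: algebra_simps)
  finally show ?case .
qed

lemma cycleN:
  assumes p: "p \<in> X" and pf: "\<forall>i\<in>{1..N}. \<bar>f i p\<bar> \<noteq> \<infinity>"
  shows "(sqrt \<kappa> * dist (x (Suc j * N)) p)^2 \<le> (sqrt \<kappa> * dist (x (j * N)) p)^2
     - \<kappa> * lam j * (RF (x (j * N)) - RF p) + N * E1 * (lam j)^2"
  using cycle[OF p pf, of N j] by (simp add: RF_def sum_subtractf add.commute)

end

context alg begin

lemma E1_nonneg: "0 \<le> E1"
proof -
  have "0 \<le> Mp" using Psi_upper[OF xX[of 0] xX[of 0]] by (simp add: Psi_self)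
  then show ?thesis unfolding E1_def using k L C_nonneg by (intro add_nonneg_nonneg mult_nonneg_nonneg) auto
qed

lemma Fx: "(\<Sum>i=1..N. f i (x (j * N))) = ereal (RF (x (j * N)))"
  by (intro F_eq ballI finB)

lemma fej:
  assumes p: "p \<in> X" and pmin: "\<forall>y\<in>X. (\<Sum>i=1..N. f i p) \<le> (\<Sum>i=1..N. f i y)"
  shows "convergent (\<lambda>j. (sqrt \<kappa> * dist (x (j * N)) p)^2)
     \<and> summable (\<lambda>j. \<kappa> * lam j * (RF (x (j * N)) - RF p))
     \<and> (\<forall>j. RF p \<le> RF (x (j * N)))"
proof -
  have pf: "\<forall>i\<in>{1..N}. \<bar>f i p\<bar> \<noteq> \<infinity>" by (rule min_fin[OF p pmin])
  have Fp: "(\<Sum>i=1..N. f i p) = ereal (RF p)" by (rule F_eq[OF pf])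
  have u0: "RF p \<le> RF (x (j * N))" for j
    using pmin xX[of "j * N"] Fx[of j] Fp by auto
  have "convergent (\<lambda>j. (sqrt \<kappa> * dist (x (j * N)) p)^2)
     \<and> summable (\<lambda>j. \<kappa> * lam j * (RF (x (j * N)) - RF p))"
  proof (rule fejer_conv[where b = "\<lambda>j. N * E1 * (lam j)^2"])
    fix j
    show "0 \<le> (sqrt \<kappa> * dist (x (j * N)) p)^2" by simp
    show "0 \<le> \<kappa> * lam j * (RF (x (j * N)) - RF p)"
      using k lam_pos[rule_format, of j] u0[of j] by (intro mult_nonneg_nonneg) auto
    show "(sqrt \<kappa> * dist (x (Suc j * N)) p)^2 \<le> (sqrt \<kappa> * dist (x (j * N)) p)^2
      - \<kappa> * lam j * (RF (x (j * N)) - RF p) + N * E1 * (lam j)^2"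
      by (rule cycleN[OF p pf])
    show "0 \<le> N * E1 * (lam j)^2" using E1_nonneg by simp
  next
    show "summable (\<lambda>j. real N * E1 * (lam j)^2)" using lam_sq by (rule summable_mult)
  qed
  then show ?thesis using u0 by blast
qed

lemma lam_zero: "lam \<longlonglongrightarrow> 0"
proof -
  have "(\<lambda>j. (lam j)^2) \<longlonglongrightarrow> 0" using lam_sq by (rule summable_LIMSEQ_zero)
  then have "(\<lambda>j. sqrt ((lam j)^2)) \<longlonglongrightarrow> sqrt 0" by (intro tendsto_real_sqrt)
  moreover have "(\<lambda>j. sqrt ((lam j)^2)) = lam" using lam_pos by (simp add: fun_eq_iff less_imp_le)
  ultimately show ?thesis by simp
qed

theorem main_conv: "\<exists>p\<in>X. x \<longlonglongrightarrow> p \<and> (\<forall>y\<in>X. (\<Sum>i=1..N. f i p) \<le> (\<Sum>i=1..N. f i y))"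
proof -
  obtain p0 where p0: "p0 \<in> X" and p0min: "\<forall>y\<in>X. (\<Sum>i=1..N. f i p0) \<le> (\<Sum>i=1..N. f i y)"
    using attains by blast
  define u where "u j = RF (x (j * N)) - RF p0" for j
  have F0: "(\<Sum>i=1..N. f i p0) = ereal (RF p0)" by (rule F_eq[OF min_fin[OF p0 p0min]])
  note fj0 = fej[OF p0 p0min]
  have u0: "\<And>j. 0 \<le> u j" using fj0 by (simp add: u_def)
  have "summable (\<lambda>j. \<kappa> * lam j * u j / \<kappa>)"
    using fj0 by (intro summable_divide) (simp add: u_def)
  then have su: "summable (\<lambda>j. lam j * u j)" using k by simp
  have often: "\<forall>J k. \<exists>j. J \<le> j \<and> u j < 1 / real (Suc k)"
  proof (intro allI)
    fix J k
    show "\<exists>j. J \<le> j \<and> u j < 1 / real (Suc k)"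
      using small_often[OF su u0 _ lam_div, of "1 / real (Suc k)" J] lam_pos by auto
  qed
  then obtain ch where ch: "\<forall>J k. J \<le> ch J k \<and> u (ch J k) < 1 / real (Suc k)" by metis
  define s where "s = pick ch"
  have s_u: "u (s k) < 1 / real (Suc k)" for k
  proof (cases k)
    case 0 then show ?thesis using ch[rule_format, of 0 0] by (simp add: s_def)
  next
    case (Suc m) then show ?thesis using ch[rule_format, of "Suc (pick ch m)" "Suc m"] by (simp add: s_def)
  qed
  have "s k < s (Suc k)" for k using ch[rule_format, of "Suc (pick ch k)" "Suc k"] by (simp add: s_def Suc_le_eq)
  then have smono: "strict_mono s" by (simp add: strict_mono_Suc_iff)
  obtain q \<rho> where q: "q \<in> X" "strict_mono \<rho>" "((\<lambda>k. x (s k * N)) \<circ> \<rho>) \<longlonglongrightarrow> q"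
    using seq_compactE[OF compact_imp_seq_compact[OF cpt], of "\<lambda>k. x (s k * N)"] xX by blast
  define t where "t = s \<circ> \<rho>"
  have tmono: "strict_mono t" unfolding t_def using smono q(2) by (rule strict_mono_o)
  have xt: "(\<lambda>k. x (t k * N)) \<longlonglongrightarrow> q" using q(3) by (simp add: t_def o_def)
  have ut: "(\<lambda>k. u (t k)) \<longlonglongrightarrow> 0"
  proof (rule tendsto_sandwich[where f = "\<lambda>k. 0" and h = "\<lambda>k. 1 / real (Suc k)"])
    show "\<forall>\<^sub>F k in sequentially. 0 \<le> u (t k)" using u0 by simp
    show "\<forall>\<^sub>F k in sequentially. u (t k) \<le> 1 / real (Suc k)"
    proof (rule always_eventually, rule allI)
      fix k
      have "k \<le> \<rho> k" using q(2) by (rule seq_suble)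
      then have "1 / real (Suc (\<rho> k)) \<le> 1 / real (Suc k)" by (intro divide_left_mono) auto
      then show "u (t k) \<le> 1 / real (Suc k)" using s_u[of "\<rho> k"] by (simp add: t_def)
    qed
    show "(\<lambda>k. 1 / real (Suc k)) \<longlonglongrightarrow> 0" by (rule LIMSEQ_Suc[OF lim_1_over_n])
  qed simp
  have RFt: "(\<lambda>k. RF (x (t k * N))) \<longlonglongrightarrow> RF p0"
  proof -
    have "(\<lambda>k. u (t k) + RF p0) \<longlonglongrightarrow> 0 + RF p0" using ut by (intro tendsto_add) auto
    then show ?thesis by (simp add: u_def)
  qed
  have "\<forall>i\<in>{1..N}. \<exists>l. \<forall>y\<in>X. ereal l \<le> f i y" using f_lb by blast
  then obtain lb where lb: "\<forall>i\<in>{1..N}. \<forall>y\<in>X. ereal (lb i) \<le> f i y" by metis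
  have qmin: "\<forall>y\<in>X. (\<Sum>i=1..N. f i q) \<le> (\<Sum>i=1..N. f i y)"
  proof
    fix y assume y: "y \<in> X"
    have "(\<Sum>i=1..N. f i q) \<le> (\<Sum>i=1..N. liminf (\<lambda>k. ereal (r i (x (t k * N)))))"
    proof (rule sum_mono)
      fix i assume i: "i \<in> {1..N}"
      have ls: "lsc_on X (f i)" using f_lsc i by blast
      have "f i q \<le> liminf (\<lambda>k. f i (x (t k * N)))"
        using ls[unfolded lsc_on_def, rule_format, OF q(1), of "\<lambda>k. x (t k * N)"] xX xt by simp
      also have "(\<lambda>k. f i (x (t k * N))) = (\<lambda>k. ereal (r i (x (t k * N))))"
        using i by (intro ext r_eq finB)
      finally show "f i q \<le> liminf (\<lambda>k. ereal (r i (x (t k * N))))" .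
    qed
    also have "\<dots> \<le> liminf (\<lambda>k. ereal (\<Sum>i=1..N. r i (x (t k * N))))"
    proof (rule liminf_sum_lb[where l = lb])
      fix i k assume i: "i \<in> {1..N}"
      have "ereal (lb i) \<le> f i (x (t k * N))" using lb i xX by blast
      also have "f i (x (t k * N)) = ereal (r i (x (t k * N)))" using i by (intro r_eq finB)
      finally show "lb i \<le> r i (x (t k * N))" by simp
    qed simp
    also have "\<dots> = ereal (RF p0)"
      using RFt unfolding RF_def by (intro lim_imp_Liminf) (auto intro: tendsto_ereal)
    also have "\<dots> \<le> (\<Sum>i=1..N. f i y)" using p0min y F0 by metis
    finally show "(\<Sum>i=1..N. f i q) \<le> (\<Sum>i=1..N. f i y)" .
  qed
  note fjq = fej[OF q(1) qmin]
  define V where "V j = (sqrt \<kappa> * dist (x (j * N)) q)^2" for j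
  have cV: "convergent V" using fjq unfolding V_def[abs_def] by simp
  have Vt: "(\<lambda>k. V (t k)) \<longlonglongrightarrow> 0"
  proof -
    have "(\<lambda>k. (sqrt \<kappa> * dist (x (t k * N)) q)^2) \<longlonglongrightarrow> (sqrt \<kappa> * dist q q)^2"
      using xt by (intro tendsto_intros)
    then show ?thesis by (simp add: V_def)
  qed
  have V0: "V \<longlonglongrightarrow> 0"
  proof -
    obtain l where l: "V \<longlonglongrightarrow> l" using cV by (auto simp: convergent_def)
    have "(V \<circ> t) \<longlonglongrightarrow> l" using LIMSEQ_subseq_LIMSEQ[OF l tmono] .
    then have "l = 0" using Vt LIMSEQ_unique by (auto simp: o_def)
    then show ?thesis using l by simp
  qed
  have d0: "(\<lambda>j. dist (x (j * N)) q) \<longlonglongrightarrow> 0"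
  proof -
    have "(\<lambda>j. sqrt (V j) / sqrt \<kappa>) \<longlonglongrightarrow> sqrt 0 / sqrt \<kappa>"
      using V0 k by (intro tendsto_intros) auto
    moreover have "sqrt (V j) / sqrt \<kappa> = dist (x (j * N)) q" for j
      using Kpos by (simp add: V_def)
    ultimately show ?thesis by simp
  qed
  define a where "a j = N * C * lam j + dist (x (j * N)) q" for j
  have a0: "a \<longlonglongrightarrow> 0"
  proof -
    have "(\<lambda>j. N * C * lam j + dist (x (j * N)) q) \<longlonglongrightarrow> N * C * 0 + 0"
      using lam_zero d0 by (intro tendsto_intros)
    then show ?thesis unfolding a_def[abs_def] by simp
  qed
  have "x \<longlonglongrightarrow> q"
  proof (rule metric_LIMSEQ_I)
    fix e :: real assume e: "e > 0"
    obtain J where J: "\<forall>j\<ge>J. dist (a j) 0 < e" using metric_LIMSEQ_D[OF a0 e] by blast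
    show "\<exists>no. \<forall>n\<ge>no. dist (x n) q < e"
    proof (intro exI allI impI)
      fix n assume n: "J * N \<le> n"
      define j where "j = n div N"
      define i where "i = n mod N"
      have nj: "n = j * N + i" by (simp add: j_def i_def)
      have iN: "i \<le> N" using N by (simp add: i_def less_imp_le)
      have jJ: "J \<le> j" using n N unfolding j_def by (metis div_le_mono div_mult_self_is_m le_trans not_one_le_zero
          less_one not_le)
      have "dist (x n) q \<le> dist (x (j * N)) (x n) + dist (x (j * N)) q"
        by (rule dist_triangle3)
      also have "dist (x (j * N)) (x n) \<le> i * C * lam j" using cum_bound[OF iN, of j] nj by simp
      also have "i * C * lam j \<le> N * C * lam j"
        using iN C_nonneg lam_pos by (intro mult_right_mono) (auto simp: less_imp_le)
      also have "N * C * lam j + dist (x (j * N)) q = a j" by (simp add: a_def)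
      also have "a j < e"
      proof -
        have "\<bar>a j\<bar> < e" using J jJ by simp
        moreover have "0 \<le> a j" using C_nonneg lam_pos[rule_format, of j] by (simp add: a_def)
        ultimately show ?thesis by simp
      qed
      finally show "dist (x n) q < e" by simp
    qed
  qed
  then show ?thesis using q(1) qmin by blast
qed

end

theorem mainTheorem5:
  fixes \<kappa> :: real and X :: "'a::metric_space set" and N :: nat
    and f :: "nat \<Rightarrow> 'a \<Rightarrow> ereal" and x0 :: 'a and lam :: "nat \<Rightarrow> real"
    and x :: "nat \<Rightarrow> 'a" and L :: real
  assumes kappa: "\<kappa> > 0"
    and cpt: "compact X" and cat: "CAT_space \<kappa> X"
    and diam: "\<forall>v\<in>X. \<forall>w\<in>X. dist v w < pi / (2 * sqrt \<kappa>)"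
    and N: "N \<ge> 1"
    and fin: "\<forall>i\<in>{1..N}. \<forall>y\<in>X. f i y \<noteq> -\<infinity>"
    and f_proper: "\<forall>i\<in>{1..N}. proper_on X (f i)"
    and f_conv: "\<forall>i\<in>{1..N}. geo_convex X (f i)"
    and f_lsc: "\<forall>i\<in>{1..N}. lsc_on X (f i)"
    and attains: "\<exists>z\<in>X. \<forall>y\<in>X. (\<Sum>i=1..N. f i z) \<le> (\<Sum>i=1..N. f i y)"
    and x0: "x0 \<in> X"
    and lam_pos: "\<forall>j. lam j > 0"
    and lam_div: "\<not> summable lam"
    and lam_sq: "summable (\<lambda>j. (lam j)\<^sup>2)"
    and x_0: "x 0 = x0"
    and x_step: "\<forall>j. \<forall>i\<in>{1..N}. x (j * N + i) = resolvent \<kappa> X (f i) (lam j) (x (j * N + i - 1))"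
    and L: "L > 0"
    and Lip: "\<forall>j. \<forall>i\<in>{1..N}.
        f i (x (j * N)) \<le> f i (x (j * N + i)) + ereal (L * dist (x (j * N)) (x (j * N + i))) \<and>
        f i (x (j * N + i - 1)) \<le> f i (x (j * N + i)) + ereal (L * dist (x (j * N + i - 1)) (x (j * N + i)))"
  shows "\<exists>p\<in>X. x \<longlonglongrightarrow> p \<and> (\<forall>y\<in>X. (\<Sum>i=1..N. f i p) \<le> (\<Sum>i=1..N. f i y))"
proof -
  interpret alg \<kappa> X N f lam x L
    by unfold_locales (use kappa cpt cat diam N fin f_proper f_conv f_lsc attains x0 x_0 lam_pos
        lam_div lam_sq x_step L Lip in auto)
  show ?thesis by (rule main_conv)
qed

end
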